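(* Let $n\ge2$. The isolated subsemigroups of $\overline{\mathcal{PI}^{\ast}}_n$ are exactly $\overline{\mathcal{PI}^{\ast}}_n$, $\mathcal{S}_n$, $\overline{\mathcal{PI}^{\ast}}_n\setminus\mathcal{S}_n$, and the maximal subgroups $G(e)$ where $e$ is an idempotent with $\mathrm{corank}(e)\le 1$.
   Context: Let $X=\{1,\dots,n\}$, $X'=\{1',\dots,n'\}$. $\overline{\mathcal{PI}^{\ast}}_n$ is the set of partitions of $X\cup X'$ each of whose blocks is a singleton (point) or a generalised line (a set meeting both $X$ and $X'$), with product $\circ$: $\alpha\circ\beta$ has as generalised lines exactly the sets $A\cup D'$ such that $A\cup B'$ is a generalised line of $\alpha$ and $B\cup D'$ is a generalised line of $\beta$ (same $B\subseteq X$), all other elements being points. Idempotents are exactly the elements whose generalised lines all have the form $E\cup E'$. For an idempotent $e$, $\mathrm{corank}(e)$ is the number of $x\in X$ such that $\{x\}$ is a block of $e$. $\mathcal{S}_n$ is the group of units (elements all of whose blocks are $\{x,\pi(x)'\}$ for a permutation $\pi$). $G(e)$ is the $\mathcal{H}$-class of $e$. A subsemigroup $T$ of a semigroup $S$ is isolated if for all $a\in S$ and $k\ge1$, $a^k\in T$ implies $a\in T$. *)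

theory Defs
  imports Main
begin

definition Xs :: "nat \<Rightarrow> (nat + nat) set" where
  "Xs n = Inl ` {1..n}"

definition Xs' :: "nat \<Rightarrow> (nat + nat) set" where
  "Xs' n = Inr ` {1..n}"

definition is_partition_of :: "'a set \<Rightarrow> 'a set set \<Rightarrow> bool" where
  "is_partition_of U P \<longleftrightarrow> (\<forall>b\<in>P. b \<noteq> {}) \<and> \<Union>P = U \<and>
     (\<forall>b\<in>P. \<forall>c\<in>P. b \<noteq> c \<longrightarrow> b \<inter> c = {})"

definition gen_line :: "nat \<Rightarrow> (nat + nat) set \<Rightarrow> bool" where
  "gen_line n b \<longleftrightarrow> b \<inter> Xs n \<noteq> {} \<and> b \<inter> Xs' n \<noteq> {}"

definition PIbar :: "nat \<Rightarrow> (nat + nat) set set set" where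
  "PIbar n = {\<alpha>. is_partition_of (Xs n \<union> Xs' n) \<alpha> \<and>
                  (\<forall>b\<in>\<alpha>. (\<exists>z. b = {z}) \<or> gen_line n b)}"

definition lineset :: "nat set \<Rightarrow> nat set \<Rightarrow> (nat + nat) set" where
  "lineset A B = Inl ` A \<union> Inr ` B"

definition lines_of :: "nat \<Rightarrow> (nat + nat) set set \<Rightarrow> (nat + nat) set set" where
  "lines_of n \<alpha> = {b\<in>\<alpha>. gen_line n b}"

definition prod_lines :: "nat \<Rightarrow> (nat + nat) set set \<Rightarrow> (nat + nat) set set \<Rightarrow> (nat + nat) set set" where
  "prod_lines n \<alpha> \<beta> = {lineset A D | A B D.
      lineset A B \<in> lines_of n \<alpha> \<and> lineset B D \<in> lines_of n \<beta>}"

definition pmult :: "nat \<Rightarrow> (nat + nat) set set \<Rightarrow> (nat + nat) set set \<Rightarrow> (nat + nat) set set" where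
  "pmult n \<alpha> \<beta> = prod_lines n \<alpha> \<beta> \<union>
     {{z} | z. z \<in> Xs n \<union> Xs' n \<and> z \<notin> \<Union>(prod_lines n \<alpha> \<beta>)}"

text \<open>Powers: ppow n a k = a^(k+1).\<close>
fun ppow :: "nat \<Rightarrow> (nat + nat) set set \<Rightarrow> nat \<Rightarrow> (nat + nat) set set" where
  "ppow n a 0 = a"
| "ppow n a (Suc k) = pmult n (ppow n a k) a"

definition Sym_n :: "nat \<Rightarrow> (nat + nat) set set set" where
  "Sym_n n = {\<alpha>. \<exists>\<pi>. bij_betw \<pi> {1..n} {1..n} \<and> \<alpha> = {{Inl x, Inr (\<pi> x)} | x. x \<in> {1..n}}}"

definition idempotent :: "nat \<Rightarrow> (nat + nat) set set \<Rightarrow> bool" where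
  "idempotent n e \<longleftrightarrow> e \<in> PIbar n \<and> pmult n e e = e"

definition corank :: "nat \<Rightarrow> (nat + nat) set set \<Rightarrow> nat" where
  "corank n e = card {x\<in>{1..n}. {Inl x} \<in> e}"

text \<open>Green's relations in PIbar n (using S^1).\<close>
definition greenR :: "nat \<Rightarrow> (nat + nat) set set \<Rightarrow> (nat + nat) set set \<Rightarrow> bool" where
  "greenR n a b \<longleftrightarrow> (a = b \<or> (\<exists>s\<in>PIbar n. a = pmult n b s)) \<and>
                    (b = a \<or> (\<exists>s\<in>PIbar n. b = pmult n a s))"

definition greenL :: "nat \<Rightarrow> (nat + nat) set set \<Rightarrow> (nat + nat) set set \<Rightarrow> bool" where
  "greenL n a b \<longleftrightarrow> (a = b \<or> (\<exists>s\<in>PIbar n. a = pmult n s b)) \<and>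
                    (b = a \<or> (\<exists>s\<in>PIbar n. b = pmult n s a))"

definition Hclass :: "nat \<Rightarrow> (nat + nat) set set \<Rightarrow> (nat + nat) set set set" where
  "Hclass n e = {a\<in>PIbar n. greenR n a e \<and> greenL n a e}"

definition subsemigroup :: "nat \<Rightarrow> (nat + nat) set set set \<Rightarrow> bool" where
  "subsemigroup n T \<longleftrightarrow> T \<noteq> {} \<and> T \<subseteq> PIbar n \<and> (\<forall>a\<in>T. \<forall>b\<in>T. pmult n a b \<in> T)"

definition isolated :: "nat \<Rightarrow> (nat + nat) set set set \<Rightarrow> bool" where
  "isolated n T \<longleftrightarrow> (\<forall>a\<in>PIbar n. \<forall>k. ppow n a k \<in> T \<longrightarrow> a \<in> T)"

end

theory Submission
  imports Defs
begin

definition valid :: "nat \<Rightarrow> (nat set \<times> nat set) set \<Rightarrow> bool" where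
  "valid n R \<longleftrightarrow> (\<forall>A B. (A,B)\<in>R \<longrightarrow> A \<noteq> {} \<and> B \<noteq> {} \<and> A \<subseteq> {1..n} \<and> B \<subseteq> {1..n}) \<and>
     (\<forall>A B A' B'. (A,B)\<in>R \<longrightarrow> (A',B')\<in>R \<longrightarrow> (A,B) \<noteq> (A',B') \<longrightarrow> A \<inter> A' = {} \<and> B \<inter> B' = {})"

definition fam :: "nat \<Rightarrow> nat set set \<Rightarrow> bool" where
  "fam n F \<longleftrightarrow> (\<forall>E\<in>F. E \<noteq> {} \<and> E \<subseteq> {1..n}) \<and> (\<forall>E\<in>F. \<forall>E'\<in>F. E \<noteq> E' \<longrightarrow> E \<inter> E' = {})"

definition free :: "nat \<Rightarrow> nat set set \<Rightarrow> nat set" where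
  "free n F = {1..n} - \<Union>F"

definition Gr :: "nat \<Rightarrow> nat set set \<Rightarrow> (nat set \<times> nat set) set set" where
  "Gr n F = {R. valid n R \<and> Domain R = F \<and> Range R = F}"

definition Sg :: "nat \<Rightarrow> nat set set" where
  "Sg n = (\<lambda>i. {i}) ` {1..n}"

lemma validD1: "valid n R \<Longrightarrow> (A,B) \<in> R \<Longrightarrow> A \<noteq> {} \<and> B \<noteq> {} \<and> A \<subseteq> {1..n} \<and> B \<subseteq> {1..n}"
  unfolding valid_def by blast

lemma validD2: "valid n R \<Longrightarrow> (A,B) \<in> R \<Longrightarrow> (A',B') \<in> R \<Longrightarrow> (A,B) \<noteq> (A',B') \<Longrightarrow> A \<inter> A' = {} \<and> B \<inter> B' = {}"
  unfolding valid_def by blast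

lemma validI:
  assumes "\<And>A B. (A,B)\<in>R \<Longrightarrow> A \<noteq> {} \<and> B \<noteq> {} \<and> A \<subseteq> {1..n} \<and> B \<subseteq> {1..n}"
    and "\<And>A B A' B'. (A,B)\<in>R \<Longrightarrow> (A',B')\<in>R \<Longrightarrow> (A,B) \<noteq> (A',B') \<Longrightarrow> A \<inter> A' = {} \<and> B \<inter> B' = {}"
  shows "valid n R"
  unfolding valid_def using assms by blast

lemma valid_fun: assumes "valid n R" "(A,B) \<in> R" "(A,B') \<in> R" shows "B = B'"
proof (rule ccontr)
  assume "B \<noteq> B'"
  then have "A \<inter> A = {}" using validD2[OF assms(1,2,3)] by simp
  then show False using validD1[OF assms(1,2)] by simp
qed

lemma valid_inj: assumes "valid n R" "(A,B) \<in> R" "(A',B) \<in> R" shows "A = A'"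
proof (rule ccontr)
  assume "A \<noteq> A'"
  then have "B \<inter> B = {}" using validD2[OF assms(1,2,3)] by simp
  then show False using validD1[OF assms(1,2)] by simp
qed

lemma valid_disjL: "valid n R \<Longrightarrow> (A,B) \<in> R \<Longrightarrow> (A',B') \<in> R \<Longrightarrow> A \<noteq> A' \<Longrightarrow> A \<inter> A' = {}"
  using validD2[of n R A B A' B'] by simp

lemma valid_disjR: "valid n R \<Longrightarrow> (A,B) \<in> R \<Longrightarrow> (A',B') \<in> R \<Longrightarrow> B \<noteq> B' \<Longrightarrow> B \<inter> B' = {}"
  using validD2[of n R A B A' B'] by simp

lemma valid_comp: assumes "valid n R" "valid n Q" shows "valid n (R O Q)"
proof (rule validI)
  fix A D assume "(A,D) \<in> R O Q"
  then obtain B where "(A,B) \<in> R" "(B,D) \<in> Q" by blast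
  then show "A \<noteq> {} \<and> D \<noteq> {} \<and> A \<subseteq> {1..n} \<and> D \<subseteq> {1..n}"
    using validD1[OF assms(1), of A B] validD1[OF assms(2), of B D] by simp
next
  fix A D A' D' assume a: "(A,D) \<in> R O Q" "(A',D') \<in> R O Q" "(A,D) \<noteq> (A',D')"
  then obtain B B' where b: "(A,B) \<in> R" "(B,D) \<in> Q" "(A',B') \<in> R" "(B',D') \<in> Q" by blast
  have "B \<noteq> B'"
  proof
    assume "B = B'"
    then have "A = A'" "D = D'" using b valid_inj[OF assms(1), of A B A'] valid_fun[OF assms(2), of B D D'] by simp_all
    then show False using a by simp
  qed
  then show "A \<inter> A' = {} \<and> D \<inter> D' = {}"
    using validD2[OF assms(1) b(1) b(3)] validD2[OF assms(2) b(2) b(4)] by simp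
qed

lemma valid_converse: assumes "valid n R" shows "valid n (converse R)"
proof (rule validI)
  fix A B assume "(A,B) \<in> converse R"
  then show "A \<noteq> {} \<and> B \<noteq> {} \<and> A \<subseteq> {1..n} \<and> B \<subseteq> {1..n}" using validD1[OF assms, of B A] by auto
next
  fix A B A' B' assume "(A,B) \<in> converse R" "(A',B') \<in> converse R" "(A,B) \<noteq> (A',B')"
  then show "A \<inter> A' = {} \<and> B \<inter> B' = {}" using validD2[OF assms, of B A B' A'] by auto
qed

lemma valid_subset: assumes "valid n R" "Q \<subseteq> R" shows "valid n Q"
proof (rule validI)
  fix A B assume "(A,B) \<in> Q"
  then show "A \<noteq> {} \<and> B \<noteq> {} \<and> A \<subseteq> {1..n} \<and> B \<subseteq> {1..n}" using validD1[OF assms(1), of A B] assms(2) by auto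
next
  fix A B A' B' assume "(A,B) \<in> Q" "(A',B') \<in> Q" "(A,B) \<noteq> (A',B')"
  then show "A \<inter> A' = {} \<and> B \<inter> B' = {}" using validD2[OF assms(1), of A B A' B'] assms(2) by auto
qed

lemma valid_Id_on: "valid n (Id_on F) \<longleftrightarrow> fam n F"
proof
  assume v: "valid n (Id_on F)"
  show "fam n F" unfolding fam_def
  proof (rule conjI; intro ballI impI)
    fix E assume "E \<in> F"
    then show "E \<noteq> {} \<and> E \<subseteq> {1..n}" using validD1[OF v, of E E] by (simp add: Id_on_iff)
  next
    fix E E' assume "E \<in> F" "E' \<in> F" "E \<noteq> E'"
    then show "E \<inter> E' = {}" using validD2[OF v, of E E E' E'] by (simp add: Id_on_iff)
  qed
next
  assume f: "fam n F"
  show "valid n (Id_on F)"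
  proof (rule validI)
    fix A B assume "(A,B) \<in> Id_on F"
    then show "A \<noteq> {} \<and> B \<noteq> {} \<and> A \<subseteq> {1..n} \<and> B \<subseteq> {1..n}" using f unfolding fam_def by (auto simp: Id_on_iff)
  next
    fix A B A' B' assume "(A,B) \<in> Id_on F" "(A',B') \<in> Id_on F" "(A,B) \<noteq> (A',B')"
    then show "A \<inter> A' = {} \<and> B \<inter> B' = {}" using f unfolding fam_def by (auto simp: Id_on_iff)
  qed
qed

lemma valid_sub: assumes "valid n R" shows "R \<subseteq> Pow {1..n} \<times> Pow {1..n}"
proof
  fix p assume "p \<in> R"
  then show "p \<in> Pow {1..n} \<times> Pow {1..n}" using validD1[OF assms, of "fst p" "snd p"] by (simp add: mem_Times_iff)
qed

lemma valid_finite: "valid n R \<Longrightarrow> finite R"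
  using valid_sub[of n R] finite_subset[of R "Pow {1..n} \<times> Pow {1..n}"] by simp

lemma finite_V: "finite {R. valid n R}"
proof (rule finite_subset)
  show "{R. valid n R} \<subseteq> Pow (Pow {1..n} \<times> Pow {1..n})"
    using valid_sub[of n] by auto
qed simp

lemma card_Domain: assumes "valid n R" shows "card (Domain R) = card R"
proof -
  have "inj_on fst R"
  proof (rule inj_onI)
    fix p q assume "p \<in> R" "q \<in> R" "fst p = fst q"
    then show "p = q" using valid_fun[OF assms, of "fst p" "snd p" "snd q"] by (cases p, cases q) simp
  qed
  then show ?thesis unfolding Domain_fst by (rule card_image)
qed

lemma card_Range: assumes "valid n R" shows "card (Range R) = card R"
proof -
  have "inj_on snd R"
  proof (rule inj_onI)
    fix p q assume "p \<in> R" "q \<in> R" "snd p = snd q"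
    then show "p = q" using valid_inj[OF assms, of "fst p" "snd p" "fst q"] by (cases p, cases q) simp
  qed
  then show ?thesis unfolding Range_snd by (rule card_image)
qed

lemma fam_Domain: assumes "valid n R" shows "fam n (Domain R)"
  unfolding fam_def
proof (rule conjI; intro ballI impI)
  fix E assume "E \<in> Domain R"
  then obtain B where "(E,B) \<in> R" by blast
  then show "E \<noteq> {} \<and> E \<subseteq> {1..n}" using validD1[OF assms] by blast
next
  fix E E' assume "E \<in> Domain R" "E' \<in> Domain R" "E \<noteq> E'"
  then obtain B B' where "(E,B) \<in> R" "(E',B') \<in> R" by blast
  then show "E \<inter> E' = {}" using valid_disjL[OF assms] \<open>E \<noteq> E'\<close> by blast
qed

lemma fam_Range: assumes "valid n R" shows "fam n (Range R)"
  unfolding fam_def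
proof (rule conjI; intro ballI impI)
  fix E assume "E \<in> Range R"
  then obtain B where "(B,E) \<in> R" by blast
  then show "E \<noteq> {} \<and> E \<subseteq> {1..n}" using validD1[OF assms] by blast
next
  fix E E' assume "E \<in> Range R" "E' \<in> Range R" "E \<noteq> E'"
  then obtain B B' where "(B,E) \<in> R" "(B',E') \<in> R" by blast
  then show "E \<inter> E' = {}" using valid_disjR[OF assms] \<open>E \<noteq> E'\<close> by blast
qed

lemma fam_finite: assumes "fam n F" shows "finite F"
proof (rule finite_subset)
  show "F \<subseteq> Pow {1..n}" using assms unfolding fam_def by auto
qed simp

lemma fam_subset: "fam n F \<Longrightarrow> G \<subseteq> F \<Longrightarrow> fam n G"
  unfolding fam_def by (meson subsetD)

lemma comp_Id_on_left: "Domain R \<subseteq> F \<Longrightarrow> Id_on F O R = R"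
  by (auto simp: Id_on_iff)
lemma comp_Id_on_right: "Range R \<subseteq> F \<Longrightarrow> R O Id_on F = R"
  by (auto simp: Id_on_iff)
lemma comp_conv: assumes "valid n R" shows "R O converse R = Id_on (Domain R)"
proof (rule set_eqI, rule iffI)
  fix p assume "p \<in> R O converse R"
  then obtain A A' B where "p = (A,A')" "(A,B) \<in> R" "(A',B) \<in> R" by blast
  then show "p \<in> Id_on (Domain R)" using valid_inj[OF assms, of A B A'] by auto
next
  fix p assume "p \<in> Id_on (Domain R)"
  then obtain A B where "p = (A,A)" "(A,B) \<in> R" by (auto simp: Id_on_def)
  then show "p \<in> R O converse R" by blast
qed
lemma conv_comp: assumes "valid n R" shows "converse R O R = Id_on (Range R)"
proof (rule set_eqI, rule iffI)
  fix p assume "p \<in> converse R O R"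
  then obtain A A' B where "p = (A,A')" "(B,A) \<in> R" "(B,A') \<in> R" by blast
  then show "p \<in> Id_on (Range R)" using valid_fun[OF assms, of B A A'] by auto
next
  fix p assume "p \<in> Id_on (Range R)"
  then obtain A B where "p = (A,A)" "(B,A) \<in> R" by (auto simp: Id_on_def)
  then show "p \<in> converse R O R" by blast
qed
lemma Id_on_comp: "Id_on F O Id_on G = Id_on (F \<inter> G)"
  by (auto simp: Id_on_iff)

lemma idem_Id: assumes "valid n R" "R O R = R" shows "R = Id_on (Domain R)"
proof -
  have "A = B" if "(A,B) \<in> R" for A B
  proof -
    from that assms(2) obtain C where "(A,C) \<in> R" "(C,B) \<in> R" by blast
    then have "C = B" using that valid_fun[OF assms(1)] by blast
    then show ?thesis using \<open>(C,B) \<in> R\<close> that valid_inj[OF assms(1)] by blast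
  qed
  then show ?thesis by auto
qed

lemma Domain_pow: fixes R :: "('a \<times> 'a) set" shows "Domain (R ^^ Suc k) \<subseteq> Domain R"
proof -
  have "R ^^ Suc k = R O R ^^ k" by (simp add: relpow_commute)
  then show ?thesis by blast
qed
lemma Range_pow: fixes R :: "('a \<times> 'a) set" shows "Range (R ^^ Suc k) \<subseteq> Range R"
proof -
  have "R ^^ Suc k = R ^^ k O R" by simp
  then show ?thesis by blast
qed

lemma valid_pow: "valid n R \<Longrightarrow> valid n (R ^^ Suc k)"
proof (induction k)
  case (Suc k)
  have "R ^^ Suc (Suc k) = R ^^ Suc k O R" by simp
  then show ?case using valid_comp[of n "R ^^ Suc k" R] Suc by simp
qed simp

lemma Gr_comp: assumes "R \<in> Gr n F" "Q \<in> Gr n F" shows "R O Q \<in> Gr n F"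
proof -
  have "Domain (R O Q) = F" using assms unfolding Gr_def by blast
  moreover have "Range (R O Q) = F" using assms unfolding Gr_def by blast
  ultimately show ?thesis using assms valid_comp unfolding Gr_def by simp
qed

lemma Gr_pow: "R \<in> Gr n F \<Longrightarrow> R ^^ Suc k \<in> Gr n F"
  by (induction k) (auto intro: Gr_comp)

lemma Gr_idem: "R \<in> Gr n F \<Longrightarrow> R O R = R \<Longrightarrow> R = Id_on F"
  unfolding Gr_def using idem_Id by blast

lemma Id_on_Gr: "fam n F \<Longrightarrow> Id_on F \<in> Gr n F"
  unfolding Gr_def by (auto simp: valid_Id_on)

lemma idem_pow: assumes "valid n R" shows "\<exists>k. R ^^ Suc k O R ^^ Suc k = R ^^ Suc k"
proof -
  let ?g = "\<lambda>k. R ^^ Suc k"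
  have "range ?g \<subseteq> {R. valid n R}" using valid_pow[OF assms] by auto
  then have "finite (range ?g)" using finite_V finite_subset by blast
  then have "\<not> inj ?g" using finite_imageD infinite_UNIV_nat by blast
  then obtain i j where ij: "i \<noteq> j" "?g i = ?g j" unfolding inj_def by blast
  obtain a p where ap: "a \<ge> 1" "p \<ge> 1" "R ^^ a = R ^^ (a + p)"
  proof (cases "i < j")
    case True
    show ?thesis by (rule that[of "Suc i" "j - i"]) (use True ij in auto)
  next
    case False
    then have "j < i" using ij by simp
    show ?thesis by (rule that[of "Suc j" "i - j"]) (use \<open>j < i\<close> ij in auto)
  qed
  have per: "R ^^ (a + t) = R ^^ (a + p + t)" for t
    by (metis ap(3) relpow_add)
  have per2: "R ^^ (a + t) = R ^^ (a + c * p + t)" for c t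
  proof (induction c)
    case (Suc c)
    have "R ^^ (a + Suc c * p + t) = R ^^ (a + p + (c * p + t))" by (simp add: algebra_simps)
    also have "\<dots> = R ^^ (a + (c * p + t))" using per by simp
    also have "\<dots> = R ^^ (a + t)" using Suc by (simp add: algebra_simps)
    finally show ?case by simp
  qed simp
  define m where "m = a * p"
  have "m \<ge> a" using ap unfolding m_def by simp
  have mm0: "m + m = a + a * p + (m - a)" using \<open>m \<ge> a\<close> unfolding m_def by simp
  have "R ^^ (m + m) = R ^^ (a + a * p + (m - a))" by (subst mm0) (rule refl)
  also have "\<dots> = R ^^ (a + (m - a))" using per2[of "m - a" a] by simp
  also have "\<dots> = R ^^ m" using \<open>m \<ge> a\<close> by simp
  finally have mm: "R ^^ m O R ^^ m = R ^^ m" by (simp add: relpow_add)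
  have "m \<ge> 1" using ap \<open>m \<ge> a\<close> by simp
  then have "Suc (m - 1) = m" by simp
  then show ?thesis using mm by metis
qed

lemma fam_Sg: "fam n (Sg n)"
  unfolding fam_def Sg_def by auto

lemma free_Sg: "free n (Sg n) = {}"
  unfolding free_def Sg_def by auto

lemma count_Sg: assumes "fam n F" "n \<le> card F" shows "F = Sg n"
proof -
  define f where "f = (\<lambda>B::nat set. SOME x. x \<in> B)"
  have fB: "f B \<in> B" if "B \<in> F" for B
    using that assms(1) unfolding fam_def f_def by (metis some_in_eq)
  have inj: "inj_on f F"
  proof (rule inj_onI)
    fix B B' assume "B \<in> F" "B' \<in> F" "f B = f B'"
    then have "B \<inter> B' \<noteq> {}" using fB by (metis disjoint_iff)
    then show "B = B'" using assms(1) \<open>B \<in> F\<close> \<open>B' \<in> F\<close> unfolding fam_def by meson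
  qed
  have sub: "f ` F \<subseteq> {1..n}" using fB assms(1) unfolding fam_def by auto
  have "card (f ` F) = card F" using card_image[OF inj] .
  then have "card (f ` F) \<ge> card {1..n}" using assms(2) by simp
  then have img: "f ` F = {1..n}" using card_subset_eq[OF _ sub] card_mono[OF _ sub] by (metis finite_atLeastAtMost le_antisym)
  have single: "B = {f B}" if "B \<in> F" for B
  proof
    show "{f B} \<subseteq> B" using fB that by simp
    show "B \<subseteq> {f B}"
    proof
      fix y assume "y \<in> B"
      have "B \<subseteq> {1..n}" using that assms(1) unfolding fam_def by auto
      then have "y \<in> {1..n}" using \<open>y \<in> B\<close> by (rule subsetD)
      then obtain B' where "B' \<in> F" "y = f B'" using img by (metis imageE)
      then have "y \<in> B'" using fB by simp
      then have "B = B'" using \<open>y \<in> B\<close> that \<open>B' \<in> F\<close> assms(1) unfolding fam_def by blast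
      then show "y \<in> {f B}" using \<open>y = f B'\<close> by simp
    qed
  qed
  show ?thesis
  proof
    show "F \<subseteq> Sg n" unfolding Sg_def using single img by auto
    show "Sg n \<subseteq> F"
    proof
      fix S assume "S \<in> Sg n"
      then obtain i where "i \<in> {1..n}" "S = {i}" unfolding Sg_def by auto
      then obtain B where "B \<in> F" "i = f B" using img by (metis imageE)
      then show "S \<in> F" using single \<open>S = {i}\<close> by metis
    qed
  qed
qed

lemma extra_block: assumes "valid n R" "F \<subseteq> Domain R" "A \<in> Domain R" "A \<notin> F"
  shows "A \<subseteq> free n F" "A \<noteq> {}"
proof -
  obtain B where AB: "(A,B) \<in> R" using assms(3) by blast
  have "A \<inter> E = {}" if EF: "E \<in> F" for E
  proof -
    obtain B' where "(E,B') \<in> R" using EF assms(2) by blast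
    moreover have "A \<noteq> E" using EF assms(4) by auto
    ultimately show ?thesis using valid_disjL[OF assms(1) AB] by metis
  qed
  moreover have "A \<subseteq> {1..n}" using validD1[OF assms(1) AB] by simp
  ultimately show "A \<subseteq> free n F" unfolding free_def by auto
  show "A \<noteq> {}" using validD1[OF assms(1) AB] by simp
qed

lemma extra_block_R: assumes "valid n R" "F \<subseteq> Range R" "A \<in> Range R" "A \<notin> F"
  shows "A \<subseteq> free n F" "A \<noteq> {}"
proof -
  have "F \<subseteq> Domain (converse R)" "A \<in> Domain (converse R)" using assms(2,3) by simp_all
  then show "A \<subseteq> free n F" "A \<noteq> {}" using extra_block[OF valid_converse[OF assms(1)], of F A] assms(4) by simp_all
qed

lemma free_notin: assumes "fam n F" shows "free n F \<notin> F"
proof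
  assume a: "free n F \<in> F"
  then have "free n F \<noteq> {}" using assms unfolding fam_def by auto
  then obtain x where "x \<in> free n F" by blast
  then have "x \<notin> \<Union>F" unfolding free_def by simp
  moreover have "x \<in> \<Union>F" using a \<open>x \<in> free n F\<close> by blast
  ultimately show False by simp
qed

lemma Gr_isol: assumes F: "fam n F" and c: "card (free n F) \<le> 1" and v: "valid n R"
  and p: "R ^^ Suc k \<in> Gr n F" shows "R \<in> Gr n F"
proof -
  let ?X = "free n F"
  have finX: "finite ?X" unfolding free_def by simp
  have one: "\<forall>x\<in>?X. \<forall>y\<in>?X. x = y" using c finX card_le_Suc0_iff_eq[of ?X] by simp
  have eqX: "A = ?X" if sub: "A \<subseteq> ?X" and ne: "A \<noteq> {}" for A
  proof
    show "A \<subseteq> ?X" using sub .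
    obtain a where "a \<in> A" using ne by blast
    show "?X \<subseteq> A"
    proof
      fix y assume "y \<in> ?X"
      then have "y = a" using one \<open>a \<in> A\<close> sub by blast
      then show "y \<in> A" using \<open>a \<in> A\<close> by simp
    qed
  qed
  have FD: "F \<subseteq> Domain R" using p Domain_pow[where R=R and k=k] unfolding Gr_def by simp
  have FR: "F \<subseteq> Range R" using p Range_pow[where R=R and k=k] unfolding Gr_def by simp
  have D: "Domain R \<subseteq> insert ?X F"
  proof
    fix A assume A: "A \<in> Domain R"
    show "A \<in> insert ?X F"
    proof (cases "A \<in> F")
      case False
      then show ?thesis using extra_block[OF v FD A False] eqX by simp
    qed simp
  qed
  have R: "Range R \<subseteq> insert ?X F"
  proof
    fix A assume A: "A \<in> Range R"
    show "A \<in> insert ?X F"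
    proof (cases "A \<in> F")
      case False
      then show ?thesis using extra_block_R[OF v FR A False] eqX by simp
    qed simp
  qed
  have finF: "finite F" using fam_finite[OF F] .
  have nX: "?X \<notin> F" using free_notin[OF F] .
  have cDR: "card (Domain R) = card (Range R)" using card_Domain[OF v] card_Range[OF v] by simp
  have DD: "Domain R = F \<or> Domain R = insert ?X F"
  proof (cases "?X \<in> Domain R")
    case True
    then have "insert ?X F \<subseteq> Domain R" using FD by simp
    then have "Domain R = insert ?X F" by (rule subset_antisym[OF D])
    then show ?thesis by simp
  next
    case False
    then have "Domain R \<subseteq> F" using D by blast
    then show ?thesis using FD by simp
  qed
  have RR: "Range R = F \<or> Range R = insert ?X F"
  proof (cases "?X \<in> Range R")
    case True
    then have "insert ?X F \<subseteq> Range R" using FR by simp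
    then have "Range R = insert ?X F" by (rule subset_antisym[OF R])
    then show ?thesis by simp
  next
    case False
    then have "Range R \<subseteq> F" using R by blast
    then show ?thesis using FR by simp
  qed
  have cins: "card (insert ?X F) = Suc (card F)" using finF nX by simp
  have DR: "Domain R = Range R"
  proof (cases "Domain R = F")
    case True
    show ?thesis
    proof (cases "Range R = F")
      case False
      then have "Range R = insert ?X F" using RR by simp
      then have "card (Range R) = Suc (card F)" using cins by simp
      moreover have "card (Domain R) = card F" using True by simp
      ultimately have False using cDR by simp
      then show ?thesis ..
    qed (use True in simp)
  next
    case False
    then have d: "Domain R = insert ?X F" using DD by simp
    show ?thesis
    proof (cases "Range R = F")
      case True
      then have "card (Domain R) = Suc (card F)" using cins d by simp
      moreover have "card (Range R) = card F" using True by simp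
      ultimately have False using cDR by simp
      then show ?thesis ..
    next
      case False
      then show ?thesis using RR d by simp
    qed
  qed
  show ?thesis
  proof (cases "Domain R = F")
    case True
    then show ?thesis using DR v unfolding Gr_def by simp
  next
    case False
    then have "Domain R = insert ?X F" using DD by simp
    then have "R \<in> Gr n (insert ?X F)" using DR v unfolding Gr_def by simp
    then have "R ^^ Suc k \<in> Gr n (insert ?X F)" by (rule Gr_pow)
    then have "insert ?X F = F" using p unfolding Gr_def by simp
    then have "?X \<in> F" by (metis insertI1)
    then show ?thesis using nX by simp
  qed
qed

lemma valid_union: assumes "valid n R" "valid n Q"
  and d: "\<And>A B C D. (A,B) \<in> R \<Longrightarrow> (C,D) \<in> Q \<Longrightarrow> A \<inter> C = {} \<and> B \<inter> D = {}"
  shows "valid n (R \<union> Q)"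
proof (rule validI)
  fix A B assume "(A,B) \<in> R \<union> Q"
  then show "A \<noteq> {} \<and> B \<noteq> {} \<and> A \<subseteq> {1..n} \<and> B \<subseteq> {1..n}"
    using validD1[OF assms(1), of A B] validD1[OF assms(2), of A B] by blast
next
  fix A B A' B' assume a: "(A,B) \<in> R \<union> Q" "(A',B') \<in> R \<union> Q" "(A,B) \<noteq> (A',B')"
  show "A \<inter> A' = {} \<and> B \<inter> B' = {}"
  proof (cases "(A,B) \<in> R")
    case True
    show ?thesis
    proof (cases "(A',B') \<in> R")
      case True
      show ?thesis using validD2[OF assms(1) \<open>(A,B) \<in> R\<close> True a(3)] by simp
    next
      case False
      then have "(A',B') \<in> Q" using a(2) by simp
      then show ?thesis using d[OF \<open>(A,B) \<in> R\<close>] by simp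
    qed
  next
    case False
    then have q: "(A,B) \<in> Q" using a(1) by simp
    show ?thesis
    proof (cases "(A',B') \<in> R")
      case True
      have "A' \<inter> A = {} \<and> B' \<inter> B = {}" using d[OF True q] by simp
      then show ?thesis by blast
    next
      case False
      then have "(A',B') \<in> Q" using a(2) by simp
      then show ?thesis using validD2[OF assms(2) q _ a(3)] by simp
    qed
  qed
qed

lemma valid_single: "A \<noteq> {} \<Longrightarrow> B \<noteq> {} \<Longrightarrow> A \<subseteq> {1..n} \<Longrightarrow> B \<subseteq> {1..n} \<Longrightarrow> valid n {(A,B)}"
  by (rule validI) auto

lemma valid_swap: "A \<noteq> {} \<Longrightarrow> B \<noteq> {} \<Longrightarrow> A \<subseteq> {1..n} \<Longrightarrow> B \<subseteq> {1..n} \<Longrightarrow> A \<inter> B = {} \<Longrightarrow> valid n {(A,B),(B,A)}"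
  by (rule validI) auto

lemma fam_disj: "fam n F \<Longrightarrow> E \<in> F \<Longrightarrow> E' \<in> F \<Longrightarrow> E \<noteq> E' \<Longrightarrow> E \<inter> E' = {}"
  unfolding fam_def by blast

lemma fam_ne: "fam n F \<Longrightarrow> E \<in> F \<Longrightarrow> E \<noteq> {}"
  unfolding fam_def by blast

lemma fam_sub: "fam n F \<Longrightarrow> E \<in> F \<Longrightarrow> E \<subseteq> {1..n}"
  unfolding fam_def by blast

lemma disj_notin: "E \<noteq> {} \<Longrightarrow> E \<inter> \<Union>F = {} \<Longrightarrow> E \<notin> F"
  by blast

locale isoT =
  fixes n :: nat and TT :: "(nat set \<times> nat set) set set"
  assumes n2: "2 \<le> n"
    and sub: "\<And>R. R \<in> TT \<Longrightarrow> valid n R"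
    and cl: "\<And>R Q. R \<in> TT \<Longrightarrow> Q \<in> TT \<Longrightarrow> R O Q \<in> TT"
    and iso: "\<And>R k. valid n R \<Longrightarrow> R ^^ Suc k \<in> TT \<Longrightarrow> R \<in> TT"
begin

lemma iso_sq: assumes "valid n R" "R O R \<in> TT" shows "R \<in> TT"
proof -
  have "R ^^ Suc 1 = R O R" by simp
  then show ?thesis using iso[OF assms(1), of 1] assms(2) by simp
qed

lemma pow_in: "R \<in> TT \<Longrightarrow> R ^^ Suc k \<in> TT"
proof (induction k)
  case (Suc k)
  have "R ^^ Suc (Suc k) = R ^^ Suc k O R" by simp
  then show ?case using cl Suc by simp
qed simp

lemma step:
  assumes F: "fam n F" and E: "E \<noteq> {}" "E \<subseteq> {1..n}" "E \<inter> \<Union>F = {}"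
    and P: "P \<noteq> {}" "P \<subseteq> {1..n}" "P \<inter> \<Union>F = {}" and PE: "P \<noteq> E"
    and I: "Id_on F \<in> TT"
  shows "Id_on (insert E F) \<in> TT"
proof -
  have EF: "E \<notin> F" using disj_notin[OF E(1,3)] .
  have PF: "P \<notin> F" using disj_notin[OF P(1,3)] .
  let ?a = "Id_on F \<union> {(E,P)}"
  let ?b = "Id_on F \<union> {(P,E)}"
  have vI: "valid n (Id_on F)" using F valid_Id_on by simp
  have va: "valid n ?a"
    by (rule valid_union[OF vI valid_single[OF E(1) P(1) E(2) P(2)]]) (use E(3) P(3) in \<open>auto simp: Id_on_iff\<close>)
  have vb: "valid n ?b"
    by (rule valid_union[OF vI valid_single[OF P(1) E(1) P(2) E(2)]]) (use E(3) P(3) in \<open>auto simp: Id_on_iff\<close>)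
  have "?a O ?a = Id_on F" using EF PF PE by (auto simp: Id_on_iff)
  then have a: "?a \<in> TT" using iso_sq[OF va] I by simp
  have "?b O ?b = Id_on F" using EF PF PE by (auto simp: Id_on_iff)
  then have b: "?b \<in> TT" using iso_sq[OF vb] I by simp
  have "?a O ?b = Id_on (insert E F)" using EF PF PE by (auto simp: Id_on_iff)
  then show ?thesis using cl[OF a b] by simp
qed

lemma shrink:
  assumes F: "fam n F" and I: "Id_on F \<in> TT" and x: "x \<in> free n F" and y: "y \<in> free n F"
    and xy: "x \<noteq> y" and E1: "E1 \<in> F"
  shows "Id_on (F - {E1}) \<in> TT"
proof -
  have xn: "{x} \<subseteq> {1..n}" "{x} \<inter> \<Union>F = {}" using x unfolding free_def by auto
  have yn: "{y} \<subseteq> {1..n}" "{y} \<inter> \<Union>F = {}" using y unfolding free_def by auto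
  have f: "Id_on (insert {x} F) \<in> TT"
    by (rule step[OF F _ xn(1) xn(2) _ yn(1) yn(2) _ I]) (use xy in auto)
  have xF: "{x} \<notin> F" using disj_notin[OF _ xn(2)] by simp
  have xE: "x \<notin> E1" using xn(2) E1 by blast
  let ?c = "Id_on (F - {E1}) \<union> {(E1,{x}),({x},E1)}"
  have v1: "valid n (Id_on (F - {E1}))" using fam_subset[OF F] valid_Id_on by blast
  have v2: "valid n {(E1,{x}),({x},E1)}"
    by (rule valid_swap) (use fam_ne[OF F E1] fam_sub[OF F E1] xn xE in auto)
  have dE: "G \<inter> E1 = {}" if "G \<in> F - {E1}" for G using fam_disj[OF F, of G E1] that E1 by blast
  have dx: "G \<inter> {x} = {}" if "G \<in> F - {E1}" for G using that xn(2) by blast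
  have vc: "valid n ?c"
    by (rule valid_union[OF v1 v2]) (use dE dx in \<open>auto simp: Id_on_iff\<close>)
  have "?c O ?c = Id_on (insert {x} F)" using xF xE E1 by (auto simp: Id_on_iff)
  then have c: "?c \<in> TT" using iso_sq[OF vc] f by simp
  have "(Id_on F O ?c) O Id_on F = Id_on (F - {E1})" using xF xE E1 by (auto simp: Id_on_iff)
  then show ?thesis using cl[OF cl[OF I c] I] by simp
qed

lemma free_mono: "G \<subseteq> F \<Longrightarrow> free n F \<subseteq> free n G"
  unfolding free_def by auto

lemma zero_in:
  assumes "fam n F" "Id_on F \<in> TT" "x \<in> free n F" "y \<in> free n F" "x \<noteq> y"
  shows "{} \<in> TT"
proof -
  have "finite F" using fam_finite[OF assms(1)] .
  then show ?thesis using assms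
  proof (induction F rule: finite_induct)
    case empty
    then show ?case by simp
  next
    case (insert E F)
    have fF: "fam n F" using fam_subset[OF insert.prems(1)] by blast
    have "Id_on (insert E F - {E}) \<in> TT"
      using shrink[OF insert.prems(1,2,3,4,5) insertI1] .
    moreover have "insert E F - {E} = F" using insert.hyps(2) by simp
    ultimately have "Id_on F \<in> TT" by simp
    moreover have "free n (insert E F) \<subseteq> free n F" by (rule free_mono) blast
    ultimately show ?case using insert.IH[OF fF] insert.prems(3,4,5) by blast
  qed
qed

lemma all_idem:
  assumes z: "{} \<in> TT" and "fam n F" "x \<in> free n F"
  shows "Id_on F \<in> TT"
proof -
  have "finite F" using fam_finite[OF assms(2)] .
  then show ?thesis using assms(2,3)
  proof (induction F rule: finite_induct)
    case empty
    then show ?case using z by simp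
  next
    case (insert E F)
    have fF: "fam n F" using fam_subset[OF insert.prems(1)] by blast
    have xF: "x \<in> free n F" using free_mono[of F "insert E F"] insert.prems(2) by blast
    have I: "Id_on F \<in> TT" using insert.IH[OF fF xF] .
    have EE: "E \<noteq> {}" "E \<subseteq> {1..n}" using fam_ne[OF insert.prems(1)] fam_sub[OF insert.prems(1)] by auto
    have ED: "E \<inter> \<Union>F = {}" using fam_disj[OF insert.prems(1), of E] insert.hyps(2) by blast
    have xn: "{x} \<subseteq> {1..n}" "{x} \<inter> \<Union>F = {}" using xF unfolding free_def by auto
    have xE: "{x} \<noteq> E" using insert.prems(2) unfolding free_def by auto
    show ?case by (rule step[OF fF EE ED _ xn xE I]) simp
  qed
qed

lemma all_idem2:
  assumes z: "{} \<in> TT" and F: "fam n F" and ne: "F \<noteq> Sg n"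
  shows "Id_on F \<in> TT"
proof (cases "free n F = {}")
  case False
  then obtain x where "x \<in> free n F" by blast
  then show ?thesis using all_idem[OF z F] by blast
next
  case True
  have "\<exists>E\<in>F. \<not> (\<exists>i. E = {i})"
  proof (rule ccontr)
    assume "\<not> ?thesis"
    then have all: "\<forall>E\<in>F. \<exists>i. E = {i}" by blast
    have "F \<subseteq> Sg n"
    proof
      fix E assume "E \<in> F"
      then obtain i where "E = {i}" using all by blast
      then show "E \<in> Sg n" using fam_sub[OF F \<open>E \<in> F\<close>] unfolding Sg_def by auto
    qed
    moreover have "Sg n \<subseteq> F"
    proof
      fix S assume "S \<in> Sg n"
      then obtain i where i: "i \<in> {1..n}" "S = {i}" unfolding Sg_def by auto
      then have "i \<in> \<Union>F" using True unfolding free_def by auto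
      then obtain E where "E \<in> F" "i \<in> E" by blast
      then show "S \<in> F" using all i by force
    qed
    ultimately show False using ne by simp
  qed
  then obtain E where E: "E \<in> F" "\<not> (\<exists>i. E = {i})" by blast
  obtain y where y: "y \<in> E" using fam_ne[OF F E(1)] by blast
  let ?F' = "F - {E}"
  have fF': "fam n ?F'" using fam_subset[OF F] by blast
  have ED: "E \<inter> \<Union>?F' = {}" using fam_disj[OF F, of E] E(1) by blast
  have yF: "y \<in> free n ?F'" using y ED fam_sub[OF F E(1)] unfolding free_def by blast
  have I: "Id_on ?F' \<in> TT" using all_idem[OF z fF' yF] .
  have yn: "{y} \<subseteq> {1..n}" "{y} \<inter> \<Union>?F' = {}" using yF unfolding free_def by auto
  have "Id_on (insert E ?F') \<in> TT"
    by (rule step[OF fF' fam_ne[OF F E(1)] fam_sub[OF F E(1)] ED _ yn _ I]) (use E(2) in auto)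
  moreover have "insert E ?F' = F" using E(1) by blast
  ultimately show ?thesis by simp
qed

lemma Gr_all: assumes "R \<in> TT" "R \<in> Gr n F" "Q \<in> Gr n F" shows "Q \<in> TT"
proof -
  obtain k where k: "R ^^ Suc k O R ^^ Suc k = R ^^ Suc k" using idem_pow[OF sub[OF assms(1)]] by blast
  have "R ^^ Suc k = Id_on F" using Gr_idem[OF Gr_pow[OF assms(2)] k] .
  then have I: "Id_on F \<in> TT" using pow_in[OF assms(1)] by metis
  have vQ: "valid n Q" using assms(3) unfolding Gr_def by simp
  obtain j where j: "Q ^^ Suc j O Q ^^ Suc j = Q ^^ Suc j" using idem_pow[OF vQ] by blast
  have "Q ^^ Suc j = Id_on F" using Gr_idem[OF Gr_pow[OF assms(3)] j] .
  then show ?thesis using iso[OF vQ, of j] I by simp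
qed

lemma nonunits: assumes z: "{} \<in> TT" and v: "valid n R" and nu: "R \<notin> Gr n (Sg n)"
  shows "R \<in> TT"
proof -
  obtain k where k: "R ^^ Suc k O R ^^ Suc k = R ^^ Suc k" using idem_pow[OF v] by blast
  let ?I = "R ^^ Suc k"
  have vI: "valid n ?I" using valid_pow[OF v] .
  have II: "?I = Id_on (Domain ?I)" using idem_Id[OF vI k] .
  have fD: "fam n (Domain ?I)" using fam_Domain[OF vI] .
  have "Domain ?I \<noteq> Sg n"
  proof
    assume "Domain ?I = Sg n"
    then have "?I \<in> Gr n (Sg n)" using II Id_on_Gr[OF fam_Sg[of n]] by metis
    then have "R \<in> Gr n (Sg n)" using Gr_isol[OF fam_Sg] free_Sg v by simp
    then show False using nu by simp
  qed
  then have "Id_on (Domain ?I) \<in> TT" using all_idem2[OF z fD] by simp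
  then have "?I \<in> TT" using II by simp
  then show ?thesis using iso[OF v] by blast
qed

lemma strict:
  assumes z: "{} \<notin> TT" and F: "fam n F" and IF: "Id_on F \<in> TT" and IG: "Id_on G \<in> TT"
    and GF: "G \<subseteq> F" and E: "E \<in> F" "E \<notin> G"
  shows False
proof -
  have G: "fam n G" using fam_subset[OF F GF] .
  have one: "x = y" if "x \<in> free n G" "y \<in> free n G" for x y
    using zero_in[OF G IG that] z by blast
  have ED: "E \<inter> \<Union>G = {}" using fam_disj[OF F, of E] E GF by blast
  have Efree: "E \<subseteq> free n G" using ED fam_sub[OF F E(1)] unfolding free_def by blast
  obtain x where x: "x \<in> E" using fam_ne[OF F E(1)] by blast
  have "G \<noteq> {}"
  proof
    assume "G = {}"
    then have "1 \<in> free n G" "2 \<in> free n G" using n2 unfolding free_def by auto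
    then show False using one by fastforce
  qed
  then obtain G1 where G1: "G1 \<in> G" by blast
  have G1F: "G1 \<in> F" using G1 GF by blast
  have GE: "G1 \<noteq> E" using G1 E by blast
  have dGE: "G1 \<inter> E = {}" using fam_disj[OF F G1F E(1) GE] .
  let ?c = "Id_on (F - {E, G1}) \<union> {(G1,E),(E,G1)}"
  have v1: "valid n (Id_on (F - {E, G1}))" using fam_subset[OF F] valid_Id_on by blast
  have v2: "valid n {(G1,E),(E,G1)}"
    by (rule valid_swap) (use fam_ne[OF F E(1)] fam_sub[OF F E(1)] fam_ne[OF F G1F] fam_sub[OF F G1F] dGE in auto)
  have d1: "H \<inter> E = {}" if "H \<in> F - {E, G1}" for H using fam_disj[OF F, of H E] that E(1) by blast
  have d2: "H \<inter> G1 = {}" if "H \<in> F - {E, G1}" for H using fam_disj[OF F, of H G1] that G1F by blast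
  have vc: "valid n ?c"
    by (rule valid_union[OF v1 v2]) (use d1 d2 in \<open>auto simp: Id_on_iff\<close>)
  have "?c O ?c = Id_on F" using E(1) G1F GE by (auto simp: Id_on_iff)
  then have c: "?c \<in> TT" using iso_sq[OF vc] IF by simp
  have "(Id_on G O ?c) O Id_on G = Id_on (G - {G1})" using E G1 GE GF by (auto simp: Id_on_iff)
  then have I2: "Id_on (G - {G1}) \<in> TT" using cl[OF cl[OF IG c] IG] by simp
  obtain y where y: "y \<in> G1" using fam_ne[OF G G1] by blast
  have "x \<noteq> y" using x y dGE by blast
  have G1D: "G1 \<inter> \<Union>(G - {G1}) = {}" using fam_disj[OF G, of G1] G1 by blast
  have "x \<in> free n (G - {G1})" using x Efree free_mono[of "G - {G1}" G] by blast
  moreover have "y \<in> free n (G - {G1})" using y G1D fam_sub[OF G G1] unfolding free_def by blast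
  ultimately have "{} \<in> TT" using zero_in[OF fam_subset[OF G] I2] \<open>x \<noteq> y\<close> by blast
  then show False using z by simp
qed

lemma two_idem:
  assumes z: "{} \<notin> TT" and F: "fam n F" and G: "fam n G" and IF: "Id_on F \<in> TT" and IG: "Id_on G \<in> TT"
  shows "F = G"
proof (rule ccontr)
  assume ne: "F \<noteq> G"
  have IH: "Id_on (F \<inter> G) \<in> TT" using cl[OF IF IG] Id_on_comp by metis
  show False
  proof (cases "F \<subseteq> G")
    case True
    then obtain E where "E \<in> G" "E \<notin> F \<inter> G" using ne by blast
    then show False using strict[OF z G IG IH _ ] by blast
  next
    case False
    then obtain E where "E \<in> F" "E \<notin> F \<inter> G" by blast
    then show False using strict[OF z F IF IH _ ] by blast
  qed
qed

lemma dir_zero: assumes z: "{} \<in> TT"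
  shows "TT = {R. valid n R} \<or> TT = {R. valid n R} - Gr n (Sg n)"
proof -
  have A: "{R. valid n R} - Gr n (Sg n) \<subseteq> TT" using nonunits[OF z] by blast
  have B: "TT \<subseteq> {R. valid n R}" using sub by blast
  show ?thesis
  proof (cases "TT \<inter> Gr n (Sg n) = {}")
    case True
    then show ?thesis using A B by blast
  next
    case False
    then obtain R where "R \<in> TT" "R \<in> Gr n (Sg n)" by blast
    then have "Gr n (Sg n) \<subseteq> TT" using Gr_all by blast
    then show ?thesis using A B by blast
  qed
qed

lemma dir_nozero: assumes z: "{} \<notin> TT" and ne: "TT \<noteq> {}"
  shows "\<exists>F. fam n F \<and> card (free n F) \<le> 1 \<and> TT = Gr n F"
proof -
  obtain R where R: "R \<in> TT" using ne by blast
  obtain k where k: "R ^^ Suc k O R ^^ Suc k = R ^^ Suc k" using idem_pow[OF sub[OF R]] by blast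
  let ?I = "R ^^ Suc k"
  define F where "F = Domain ?I"
  have vI: "valid n ?I" using valid_pow[OF sub[OF R]] .
  have II: "?I = Id_on F" using idem_Id[OF vI k] unfolding F_def .
  have fF: "fam n F" using fam_Domain[OF vI] unfolding F_def .
  have IT: "Id_on F \<in> TT" using pow_in[OF R] II by metis
  have cF: "card (free n F) \<le> 1"
  proof (rule ccontr)
    assume "\<not> ?thesis"
    then have "\<not> (\<forall>x\<in>free n F. \<forall>y\<in>free n F. x = y)"
      using card_le_Suc0_iff_eq[of "free n F"] unfolding free_def by auto
    then obtain x y where "x \<in> free n F" "y \<in> free n F" "x \<noteq> y" by blast
    then show False using zero_in[OF fF IT] z by blast
  qed
  have "TT = Gr n F"
  proof
    show "TT \<subseteq> Gr n F"
    proof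
      fix Q assume Q: "Q \<in> TT"
      obtain j where j: "Q ^^ Suc j O Q ^^ Suc j = Q ^^ Suc j" using idem_pow[OF sub[OF Q]] by blast
      have vJ: "valid n (Q ^^ Suc j)" using valid_pow[OF sub[OF Q]] .
      have JJ: "Q ^^ Suc j = Id_on (Domain (Q ^^ Suc j))" using idem_Id[OF vJ j] .
      have "Id_on (Domain (Q ^^ Suc j)) \<in> TT" using pow_in[OF Q] JJ by metis
      then have "Domain (Q ^^ Suc j) = F" using two_idem[OF z fam_Domain[OF vJ] fF _ IT] by blast
      then have "Q ^^ Suc j \<in> Gr n F" using JJ Id_on_Gr[OF fF] by metis
      then show "Q \<in> Gr n F" using Gr_isol[OF fF cF sub[OF Q]] by blast
    qed
  next
    show "Gr n F \<subseteq> TT"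
      using Gr_all[OF IT Id_on_Gr[OF fF]] by blast
  qed
  then show ?thesis using fF cF by blast
qed

end

definition Lr :: "nat \<Rightarrow> (nat + nat) set set \<Rightarrow> (nat set \<times> nat set) set" where
  "Lr n \<alpha> = {(A,B). lineset A B \<in> lines_of n \<alpha>}"

definition lsp :: "nat set \<times> nat set \<Rightarrow> (nat + nat) set" where
  "lsp p = lineset (fst p) (snd p)"

definition Pts :: "nat \<Rightarrow> (nat set \<times> nat set) set \<Rightarrow> (nat + nat) set set" where
  "Pts n R = {{z} | z. z \<in> Xs n \<union> Xs' n \<and> z \<notin> \<Union>(lsp ` R)}"

definition mk :: "nat \<Rightarrow> (nat set \<times> nat set) set \<Rightarrow> (nat + nat) set set" where
  "mk n R = lsp ` R \<union> Pts n R"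

lemma lsp_simp[simp]: "lsp (A,B) = lineset A B"
  by (simp add: lsp_def)

lemma in_lsp_Union: "z \<in> \<Union>(lsp ` R) \<longleftrightarrow> (\<exists>A B. (A,B) \<in> R \<and> z \<in> lineset A B)"
proof
  assume "z \<in> \<Union>(lsp ` R)"
  then obtain p where "p \<in> R" "z \<in> lsp p" by blast
  then show "\<exists>A B. (A,B) \<in> R \<and> z \<in> lineset A B" by (cases p) auto
next
  assume "\<exists>A B. (A,B) \<in> R \<and> z \<in> lineset A B"
  then obtain A B where "(A,B) \<in> R" "z \<in> lineset A B" by blast
  then show "z \<in> \<Union>(lsp ` R)" by (metis UN_I lsp_simp)
qed

lemma mk_cases:
  assumes "b \<in> mk n R"
  obtains (L) A B where "(A,B) \<in> R" "b = lineset A B"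
  | (P) z where "b = {z}" "z \<in> Xs n \<union> Xs' n" "\<And>A B. (A,B) \<in> R \<Longrightarrow> z \<notin> lineset A B"
proof (cases "b \<in> lsp ` R")
  case True
  then obtain p where "p \<in> R" "b = lsp p" by blast
  then show ?thesis using L by (cases p) auto
next
  case False
  then have "b \<in> Pts n R" using assms unfolding mk_def by blast
  then obtain z where z: "b = {z}" "z \<in> Xs n \<union> Xs' n" "z \<notin> \<Union>(lsp ` R)" unfolding Pts_def by blast
  have "z \<notin> lineset A B" if "(A,B) \<in> R" for A B
    using z(3) that in_lsp_Union[of z R] by auto
  then show ?thesis using P[OF z(1) z(2)] by blast
qed

lemma mk_lineI: "(A,B) \<in> R \<Longrightarrow> lineset A B \<in> mk n R"
  unfolding mk_def by (metis UnI1 image_eqI lsp_simp)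

lemma mk_ptI: assumes "z \<in> Xs n \<union> Xs' n" "\<And>A B. (A,B) \<in> R \<Longrightarrow> z \<notin> lineset A B"
  shows "{z} \<in> mk n R"
proof -
  have "z \<notin> \<Union>(lsp ` R)" using assms(2) in_lsp_Union[of z R] by auto
  then have "{z} \<in> Pts n R" using assms(1) unfolding Pts_def by auto
  then show ?thesis unfolding mk_def by simp
qed

lemma lineset_simps[simp]: "Inl x \<in> lineset A B \<longleftrightarrow> x \<in> A" "Inr x \<in> lineset A B \<longleftrightarrow> x \<in> B"
  by (auto simp: lineset_def)

lemma lineset_eq: "lineset A B = lineset C D \<longleftrightarrow> A = C \<and> B = D"
proof
  assume eq: "lineset A B = lineset C D"
  have "A = C" by (rule set_eqI) (metis lineset_simps(1) eq)
  moreover have "B = D" by (rule set_eqI) (metis lineset_simps(2) eq)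
  ultimately show "A = C \<and> B = D" by simp
qed simp

lemma lineset_of: "b = lineset {x. Inl x \<in> b} {x. Inr x \<in> b}"
proof (rule set_eqI)
  fix z show "z \<in> b \<longleftrightarrow> z \<in> lineset {x. Inl x \<in> b} {x. Inr x \<in> b}" by (cases z) simp_all
qed

lemma lineset_Int: "lineset A B \<inter> lineset C D = lineset (A \<inter> C) (B \<inter> D)"
  by (auto simp: lineset_def)

lemma lineset_empty: "lineset {} {} = {}"
  by (simp add: lineset_def)

lemma lineset_ne: "A \<noteq> {} \<Longrightarrow> lineset A B \<noteq> {}"
  by (auto simp: lineset_def)

lemma Xs_simps[simp]: "Inl x \<in> Xs n \<longleftrightarrow> x \<in> {1..n}" "Inr x \<notin> Xs n"
  "Inr x \<in> Xs' n \<longleftrightarrow> x \<in> {1..n}" "Inl x \<notin> Xs' n"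
  by (auto simp: Xs_def Xs'_def)

lemma gen_line_ls: "gen_line n (lineset A B) \<longleftrightarrow> A \<inter> {1..n} \<noteq> {} \<and> B \<inter> {1..n} \<noteq> {}"
proof -
  have 1: "lineset A B \<inter> Xs n = Inl ` (A \<inter> {1..n})" by (auto simp: lineset_def Xs_def)
  have 2: "lineset A B \<inter> Xs' n = Inr ` (B \<inter> {1..n})" by (auto simp: lineset_def Xs'_def)
  show ?thesis unfolding gen_line_def 1 2 by simp
qed

lemma not_gen_single: "\<not> gen_line n {z}"
  unfolding gen_line_def by (cases z) auto

lemma ls_sub: "lineset A B \<subseteq> Xs n \<union> Xs' n \<longleftrightarrow> A \<subseteq> {1..n} \<and> B \<subseteq> {1..n}"
proof
  assume a: "lineset A B \<subseteq> Xs n \<union> Xs' n"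
  have "A \<subseteq> {1..n}"
  proof
    fix x assume "x \<in> A" then have "Inl x \<in> Xs n \<union> Xs' n" using a by (metis lineset_simps(1) subsetD)
    then show "x \<in> {1..n}" by simp
  qed
  moreover have "B \<subseteq> {1..n}"
  proof
    fix x assume "x \<in> B" then have "Inr x \<in> Xs n \<union> Xs' n" using a by (metis lineset_simps(2) subsetD)
    then show "x \<in> {1..n}" by simp
  qed
  ultimately show "A \<subseteq> {1..n} \<and> B \<subseteq> {1..n}" by simp
next
  assume a: "A \<subseteq> {1..n} \<and> B \<subseteq> {1..n}"
  show "lineset A B \<subseteq> Xs n \<union> Xs' n"
  proof
    fix z assume "z \<in> lineset A B"
    then show "z \<in> Xs n \<union> Xs' n" using a by (cases z) auto
  qed
qed

lemma Lr_iff: "(A,B) \<in> Lr n \<alpha> \<longleftrightarrow> lineset A B \<in> \<alpha> \<and> gen_line n (lineset A B)"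
  by (simp add: Lr_def lines_of_def)

lemma PI1: "\<alpha> \<in> PIbar n \<Longrightarrow> b \<in> \<alpha> \<Longrightarrow> b \<noteq> {}"
  unfolding PIbar_def is_partition_of_def by blast
lemma PI2: "\<alpha> \<in> PIbar n \<Longrightarrow> \<Union>\<alpha> = Xs n \<union> Xs' n"
  unfolding PIbar_def is_partition_of_def by blast
lemma PI3: "\<alpha> \<in> PIbar n \<Longrightarrow> b \<in> \<alpha> \<Longrightarrow> c \<in> \<alpha> \<Longrightarrow> b \<noteq> c \<Longrightarrow> b \<inter> c = {}"
  unfolding PIbar_def is_partition_of_def by blast
lemma PI4: "\<alpha> \<in> PIbar n \<Longrightarrow> b \<in> \<alpha> \<Longrightarrow> (\<exists>z. b = {z}) \<or> gen_line n b"
  unfolding PIbar_def by blast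

lemma K3: assumes a: "\<alpha> \<in> PIbar n" shows "valid n (Lr n \<alpha>)"
proof (rule validI)
  fix A B assume "(A,B) \<in> Lr n \<alpha>"
  then have ab: "lineset A B \<in> \<alpha>" "gen_line n (lineset A B)" unfolding Lr_iff by simp_all
  have "lineset A B \<subseteq> \<Union>\<alpha>" using ab(1) by (rule Union_upper)
  then have "lineset A B \<subseteq> Xs n \<union> Xs' n" using PI2[OF a] by simp
  then have s: "A \<subseteq> {1..n} \<and> B \<subseteq> {1..n}" unfolding ls_sub .
  have g: "A \<inter> {1..n} \<noteq> {} \<and> B \<inter> {1..n} \<noteq> {}" using ab(2) unfolding gen_line_ls .
  show "A \<noteq> {} \<and> B \<noteq> {} \<and> A \<subseteq> {1..n} \<and> B \<subseteq> {1..n}" using s g by auto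
next
  fix A B A' B' assume l: "(A,B) \<in> Lr n \<alpha>" "(A',B') \<in> Lr n \<alpha>" and ne: "(A,B) \<noteq> (A',B')"
  have m: "lineset A B \<in> \<alpha>" "lineset A' B' \<in> \<alpha>" using l unfolding Lr_iff by simp_all
  have "lineset A B \<noteq> lineset A' B'" using ne unfolding lineset_eq by simp
  then have "lineset A B \<inter> lineset A' B' = {}" using PI3[OF a m] by simp
  then have "lineset (A \<inter> A') (B \<inter> B') = lineset {} {}" unfolding lineset_Int lineset_empty .
  then show "A \<inter> A' = {} \<and> B \<inter> B' = {}" unfolding lineset_eq .
qed

lemma K4: assumes a: "\<alpha> \<in> PIbar n" shows "mk n (Lr n \<alpha>) = \<alpha>"
proof
  show "mk n (Lr n \<alpha>) \<subseteq> \<alpha>"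
  proof
    fix b assume "b \<in> mk n (Lr n \<alpha>)"
    then show "b \<in> \<alpha>"
    proof (cases rule: mk_cases)
      case (L A B) then show ?thesis unfolding Lr_iff by simp
    next
      case (P z)
      have "z \<in> \<Union>\<alpha>" using P(2) PI2[OF a] by simp
      then obtain c where c: "c \<in> \<alpha>" "z \<in> c" by blast
      show ?thesis
      proof (cases "gen_line n c")
        case True
        let ?l = "{x. Inl x \<in> c}" and ?r = "{x. Inr x \<in> c}"
        have cl: "c = lineset ?l ?r" by (rule lineset_of)
        have "(?l, ?r) \<in> Lr n \<alpha>" unfolding Lr_iff cl[symmetric] using c(1) True by simp
        then have "z \<notin> lineset ?l ?r" by (rule P(3))
        then show ?thesis using c(2) cl by simp
      next
        case False
        then obtain w where "c = {w}" using PI4[OF a c(1)] by blast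
        then show ?thesis using c P(1) by simp
      qed
    qed
  qed
next
  show "\<alpha> \<subseteq> mk n (Lr n \<alpha>)"
  proof
    fix b assume b: "b \<in> \<alpha>"
    show "b \<in> mk n (Lr n \<alpha>)"
    proof (cases "gen_line n b")
      case True
      let ?l = "{x. Inl x \<in> b}" and ?r = "{x. Inr x \<in> b}"
      have bl: "b = lineset ?l ?r" by (rule lineset_of)
      have "(?l, ?r) \<in> Lr n \<alpha>" unfolding Lr_iff bl[symmetric] using b True by simp
      then have "lineset ?l ?r \<in> mk n (Lr n \<alpha>)" by (rule mk_lineI)
      then show ?thesis using bl by simp
    next
      case False
      then obtain z where z: "b = {z}" using PI4[OF a b] by blast
      have "b \<subseteq> \<Union>\<alpha>" using b by (rule Union_upper)
      then have zU: "z \<in> Xs n \<union> Xs' n" using PI2[OF a] z by simp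
      have h: "z \<notin> lineset A B" if AB: "(A,B) \<in> Lr n \<alpha>" for A B
      proof
        assume zin: "z \<in> lineset A B"
        have l: "lineset A B \<in> \<alpha>" "gen_line n (lineset A B)" using AB unfolding Lr_iff by simp_all
        have "lineset A B = b"
        proof (rule ccontr)
          assume "lineset A B \<noteq> b"
          then have "lineset A B \<inter> b = {}" using PI3[OF a l(1) b] by simp
          then show False using zin z by simp
        qed
        then show False using l(2) False by simp
      qed
      show ?thesis using mk_ptI[OF zU h] z by simp
    qed
  qed
qed

lemma K2: assumes v: "valid n R" shows "Lr n (mk n R) = R"
proof (rule set_eqI)
  fix p :: "nat set \<times> nat set"
  obtain A B where p: "p = (A,B)" by (cases p)
  have "(A,B) \<in> Lr n (mk n R) \<longleftrightarrow> (A,B) \<in> R"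
  proof
    assume "(A,B) \<in> Lr n (mk n R)"
    then have l: "lineset A B \<in> mk n R" "gen_line n (lineset A B)" unfolding Lr_iff by simp_all
    from l(1) show "(A,B) \<in> R"
    proof (cases rule: mk_cases)
      case (L C D) then show ?thesis unfolding lineset_eq by simp
    next
      case (P z)
      then have "gen_line n {z}" using l(2) by simp
      then show ?thesis using not_gen_single by blast
    qed
  next
    assume ab: "(A,B) \<in> R"
    then have "A \<noteq> {} \<and> B \<noteq> {} \<and> A \<subseteq> {1..n} \<and> B \<subseteq> {1..n}" using validD1[OF v ab] by simp
    then have "gen_line n (lineset A B)" unfolding gen_line_ls by (simp add: Int_absorb2)
    moreover have "lineset A B \<in> mk n R" using mk_lineI[OF ab] .
    ultimately show "(A,B) \<in> Lr n (mk n R)" unfolding Lr_iff by simp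
  qed
  then show "p \<in> Lr n (mk n R) \<longleftrightarrow> p \<in> R" using p by simp
qed

lemma K1: assumes v: "valid n R" shows "mk n R \<in> PIbar n"
proof -
  have part: "is_partition_of (Xs n \<union> Xs' n) (mk n R)"
    unfolding is_partition_of_def
  proof (intro conjI ballI impI)
    fix b assume "b \<in> mk n R"
    then show "b \<noteq> {}"
    proof (cases rule: mk_cases)
      case (L A B) then show ?thesis using validD1[OF v L(1)] lineset_ne by simp
    qed simp
  next
    show "\<Union>(mk n R) = Xs n \<union> Xs' n"
    proof
      show "\<Union>(mk n R) \<subseteq> Xs n \<union> Xs' n"
      proof
        fix z assume "z \<in> \<Union>(mk n R)"
        then obtain b where b: "b \<in> mk n R" "z \<in> b" by blast
        from b(1) show "z \<in> Xs n \<union> Xs' n"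
        proof (cases rule: mk_cases)
          case (L A B)
          then have "lineset A B \<subseteq> Xs n \<union> Xs' n" using validD1[OF v L(1)] ls_sub by blast
          then show ?thesis using b(2) L by blast
        next
          case (P w) then show ?thesis using b(2) by simp
        qed
      qed
      show "Xs n \<union> Xs' n \<subseteq> \<Union>(mk n R)"
      proof
        fix z assume z: "z \<in> Xs n \<union> Xs' n"
        show "z \<in> \<Union>(mk n R)"
        proof (cases "\<exists>A B. (A,B) \<in> R \<and> z \<in> lineset A B")
          case True
          then obtain A B where "(A,B) \<in> R" "z \<in> lineset A B" by blast
          then show ?thesis using mk_lineI by blast
        next
          case False
          then have "{z} \<in> mk n R" using mk_ptI[OF z] by blast
          then show ?thesis by blast
        qed
      qed
    qed
  next
    fix b c assume b: "b \<in> mk n R" and c: "c \<in> mk n R" and bc: "b \<noteq> c"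
    from b show "b \<inter> c = {}"
    proof (cases rule: mk_cases)
      case (L A B)
      from c show ?thesis
      proof (cases rule: mk_cases)
        case (L A' B')
        have "(A,B) \<noteq> (A',B')" using bc \<open>b = lineset A B\<close> L by auto
        then have "A \<inter> A' = {} \<and> B \<inter> B' = {}" using validD2[OF v \<open>(A,B) \<in> R\<close> L(1)] by simp
        then show ?thesis using \<open>b = lineset A B\<close> L lineset_Int lineset_empty by simp
      next
        case (P z)
        then show ?thesis using \<open>b = lineset A B\<close> \<open>(A,B) \<in> R\<close> by blast
      qed
    next
      case (P z)
      from c show ?thesis
      proof (cases rule: mk_cases)
        case (L A' B')
        then show ?thesis using P by blast
      next
        case (P w)
        then show ?thesis using \<open>b = {z}\<close> bc by blast
      qed
    qed
  qed
  have blocks: "(\<exists>z. b = {z}) \<or> gen_line n b" if b: "b \<in> mk n R" for b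
    using b
  proof (cases rule: mk_cases)
    case (L A B)
    then have "A \<noteq> {} \<and> B \<noteq> {} \<and> A \<subseteq> {1..n} \<and> B \<subseteq> {1..n}" using validD1[OF v] by blast
    then have "gen_line n (lineset A B)" using gen_line_ls by (simp add: Int_absorb2)
    then show ?thesis using L by simp
  qed simp
  show ?thesis unfolding PIbar_def using part blocks by blast
qed

lemma prod_lines_eq: "prod_lines n \<alpha> \<beta> = lsp ` (Lr n \<alpha> O Lr n \<beta>)"
proof (rule set_eqI, rule iffI)
  fix b assume "b \<in> prod_lines n \<alpha> \<beta>"
  then obtain A B D where "b = lineset A D" "lineset A B \<in> lines_of n \<alpha>" "lineset B D \<in> lines_of n \<beta>"
    unfolding prod_lines_def by blast
  then have "(A,D) \<in> Lr n \<alpha> O Lr n \<beta>" "b = lsp (A,D)" unfolding Lr_def by auto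
  then show "b \<in> lsp ` (Lr n \<alpha> O Lr n \<beta>)" by blast
next
  fix b assume "b \<in> lsp ` (Lr n \<alpha> O Lr n \<beta>)"
  then obtain p where p: "p \<in> Lr n \<alpha> O Lr n \<beta>" "b = lsp p" by blast
  obtain A D where "p = (A,D)" by (cases p)
  then obtain B where "lineset A B \<in> lines_of n \<alpha>" "lineset B D \<in> lines_of n \<beta>" "b = lineset A D"
    using p unfolding Lr_def by auto
  then show "b \<in> prod_lines n \<alpha> \<beta>" unfolding prod_lines_def by blast
qed

lemma pmult_mk: "pmult n \<alpha> \<beta> = mk n (Lr n \<alpha> O Lr n \<beta>)"
  unfolding pmult_def mk_def Pts_def prod_lines_eq by simp

lemma valid_empty: "valid n {}"
  by (rule validI) simp_all

lemma card_Sg: "card (Sg n) = n"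
proof -
  have "inj_on (\<lambda>i. {i}) {1..n}" by (rule inj_onI) simp
  then show ?thesis unfolding Sg_def by (simp add: card_image)
qed

lemma nonunit_closed: assumes v: "valid n R" and vq: "valid n Q" and g: "R O Q \<in> Gr n (Sg n)"
  shows "R \<in> Gr n (Sg n)"
proof -
  have d: "Domain (R O Q) = Sg n" using g unfolding Gr_def by simp
  have SD: "Sg n \<subseteq> Domain R"
  proof
    fix A assume "A \<in> Sg n"
    then have "A \<in> Domain (R O Q)" using d by simp
    then show "A \<in> Domain R" by blast
  qed
  have DS: "Domain R \<subseteq> Sg n"
  proof
    fix A assume A: "A \<in> Domain R"
    show "A \<in> Sg n"
    proof (rule ccontr)
      assume "A \<notin> Sg n"
      then have "A \<subseteq> free n (Sg n)" "A \<noteq> {}" using extra_block[OF v SD A] by simp_all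
      then show False using free_Sg by simp
    qed
  qed
  have D: "Domain R = Sg n" using SD DS by (rule subset_antisym[rotated])
  have "card (Range R) = n" using card_Range[OF v] card_Domain[OF v] D card_Sg by simp
  then have "Range R = Sg n" using count_Sg[OF fam_Range[OF v]] by simp
  then show ?thesis using D v unfolding Gr_def by simp
qed

lemma Gr_good: assumes F: "fam n F" and c: "card (free n F) \<le> 1"
  shows "Gr n F \<noteq> {} \<and> (\<forall>R\<in>Gr n F. \<forall>Q\<in>Gr n F. R O Q \<in> Gr n F) \<and>
         (\<forall>R k. valid n R \<longrightarrow> R ^^ Suc k \<in> Gr n F \<longrightarrow> R \<in> Gr n F)"
  using Id_on_Gr[OF F] Gr_comp Gr_isol[OF F c] by blast

theorem rel_main:
  assumes n2: "2 \<le> n" and sub: "TT \<subseteq> {R. valid n R}"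
  shows "(TT \<noteq> {} \<and> (\<forall>R\<in>TT. \<forall>Q\<in>TT. R O Q \<in> TT) \<and> (\<forall>R k. valid n R \<longrightarrow> R ^^ Suc k \<in> TT \<longrightarrow> R \<in> TT))
    \<longleftrightarrow> (TT = {R. valid n R} \<or> TT = Gr n (Sg n) \<or> TT = {R. valid n R} - Gr n (Sg n) \<or>
         (\<exists>F. fam n F \<and> card (free n F) \<le> 1 \<and> TT = Gr n F))"
proof
  assume L: "TT \<noteq> {} \<and> (\<forall>R\<in>TT. \<forall>Q\<in>TT. R O Q \<in> TT) \<and> (\<forall>R k. valid n R \<longrightarrow> R ^^ Suc k \<in> TT \<longrightarrow> R \<in> TT)"
  interpret isoT n TT
  proof
    show "2 \<le> n" by (rule n2)
    show "\<And>R. R \<in> TT \<Longrightarrow> valid n R" using sub by blast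
    show "\<And>R Q. R \<in> TT \<Longrightarrow> Q \<in> TT \<Longrightarrow> R O Q \<in> TT" using L by blast
    show "\<And>R k. valid n R \<Longrightarrow> R ^^ Suc k \<in> TT \<Longrightarrow> R \<in> TT" using L by blast
  qed
  show "TT = {R. valid n R} \<or> TT = Gr n (Sg n) \<or> TT = {R. valid n R} - Gr n (Sg n) \<or>
         (\<exists>F. fam n F \<and> card (free n F) \<le> 1 \<and> TT = Gr n F)"
  proof (cases "{} \<in> TT")
    case True
    then show ?thesis using dir_zero by blast
  next
    case False
    then show ?thesis using dir_nozero L by blast
  qed
next
  assume R: "TT = {R. valid n R} \<or> TT = Gr n (Sg n) \<or> TT = {R. valid n R} - Gr n (Sg n) \<or>
         (\<exists>F. fam n F \<and> card (free n F) \<le> 1 \<and> TT = Gr n F)"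
  have SgG: "card (free n (Sg n)) \<le> 1" using free_Sg by simp
  have emp: "{} \<notin> Gr n (Sg n)"
  proof
    assume "{} \<in> Gr n (Sg n)"
    then have "Sg n = {}" unfolding Gr_def by simp
    moreover have "{1} \<in> Sg n" using n2 unfolding Sg_def by auto
    ultimately show False by simp
  qed
  from R consider (V) "TT = {R. valid n R}" | (S) "TT = Gr n (Sg n)" | (NS) "TT = {R. valid n R} - Gr n (Sg n)"
    | (G) F where "fam n F" "card (free n F) \<le> 1" "TT = Gr n F" by blast
  then show "TT \<noteq> {} \<and> (\<forall>R\<in>TT. \<forall>Q\<in>TT. R O Q \<in> TT) \<and> (\<forall>R k. valid n R \<longrightarrow> R ^^ Suc k \<in> TT \<longrightarrow> R \<in> TT)"
  proof cases
    case V
    then show ?thesis using valid_empty valid_comp by blast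
  next
    case S
    then show ?thesis using Gr_good[OF fam_Sg SgG] by simp
  next
    case NS
    have ne: "{} \<in> TT" using NS valid_empty emp by simp
    have cl: "R O Q \<in> TT" if "R \<in> TT" "Q \<in> TT" for R Q
      using that NS valid_comp nonunit_closed by blast
    have isl: "R \<in> TT" if "valid n R" "R ^^ Suc k \<in> TT" for R k
    proof -
      have "R \<notin> Gr n (Sg n)"
      proof
        assume "R \<in> Gr n (Sg n)"
        then have "R ^^ Suc k \<in> Gr n (Sg n)" by (rule Gr_pow)
        then show False using that(2) NS by simp
      qed
      then show ?thesis using NS that(1) by simp
    qed
    show ?thesis using ne cl isl by blast
  next
    case (G F)
    then show ?thesis using Gr_good[OF G(1,2)] by simp
  qed
qed

lemma mkL: "valid n R \<Longrightarrow> mk n R \<in> PIbar n \<and> Lr n (mk n R) = R"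
  using K1 K2 by blast

lemma Lr_pmult: "\<alpha> \<in> PIbar n \<Longrightarrow> \<beta> \<in> PIbar n \<Longrightarrow> Lr n (pmult n \<alpha> \<beta>) = Lr n \<alpha> O Lr n \<beta>"
  unfolding pmult_mk using K2 valid_comp K3 by blast

lemma pmult_PI: "\<alpha> \<in> PIbar n \<Longrightarrow> \<beta> \<in> PIbar n \<Longrightarrow> pmult n \<alpha> \<beta> \<in> PIbar n"
  unfolding pmult_mk using K1 valid_comp K3 by blast

lemma Lr_inj: "\<alpha> \<in> PIbar n \<Longrightarrow> \<beta> \<in> PIbar n \<Longrightarrow> Lr n \<alpha> = Lr n \<beta> \<Longrightarrow> \<alpha> = \<beta>"
  using K4 by metis

lemma inj_Lr: "inj_on (Lr n) (PIbar n)"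
  using Lr_inj by (rule inj_onI)

lemma ppow_PI: "\<alpha> \<in> PIbar n \<Longrightarrow> ppow n \<alpha> k \<in> PIbar n \<and> Lr n (ppow n \<alpha> k) = Lr n \<alpha> ^^ Suc k"
proof (induction k)
  case 0 then show ?case by simp
next
  case (Suc k)
  have "ppow n \<alpha> (Suc k) = pmult n (ppow n \<alpha> k) \<alpha>" by simp
  then show ?case using Suc pmult_PI Lr_pmult by simp
qed

lemma img_PI: "Lr n ` PIbar n = {R. valid n R}"
proof
  show "Lr n ` PIbar n \<subseteq> {R. valid n R}" using K3 by blast
  show "{R. valid n R} \<subseteq> Lr n ` PIbar n"
  proof
    fix R assume "R \<in> {R. valid n R}"
    then have "mk n R \<in> PIbar n" "Lr n (mk n R) = R" using mkL by simp_all
    then show "R \<in> Lr n ` PIbar n" by (metis image_eqI)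
  qed
qed

lemma idem_char: "idempotent n e \<longleftrightarrow> e \<in> PIbar n \<and> Lr n e O Lr n e = Lr n e"
proof
  assume "idempotent n e"
  then have "e \<in> PIbar n" "pmult n e e = e" unfolding idempotent_def by simp_all
  then show "e \<in> PIbar n \<and> Lr n e O Lr n e = Lr n e" using Lr_pmult by metis
next
  assume a: "e \<in> PIbar n \<and> Lr n e O Lr n e = Lr n e"
  then have "Lr n (pmult n e e) = Lr n e" using Lr_pmult by metis
  then have "pmult n e e = e" using Lr_inj pmult_PI a by metis
  then show "idempotent n e" using a unfolding idempotent_def by simp
qed

lemma corank_eq: assumes e: "e \<in> PIbar n" shows "corank n e = card (free n (Domain (Lr n e)))"
proof -
  let ?R = "Lr n e"
  have v: "valid n ?R" using K3[OF e] .
  have "{x\<in>{1..n}. {Inl x} \<in> e} = free n (Domain ?R)"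
  proof (rule set_eqI, rule iffI)
    fix x assume "x \<in> {x\<in>{1..n}. {Inl x} \<in> e}"
    then have x: "x \<in> {1..n}" "{Inl x} \<in> mk n ?R" using K4[OF e] by simp_all
    from x(2) show "x \<in> free n (Domain ?R)"
    proof (cases rule: mk_cases)
      case (L A B)
      then obtain b where "b \<in> B" using validD1[OF v L(1)] by blast
      then have "Inr b \<in> {Inl x}" using L(2) by simp
      then show ?thesis by simp
    next
      case (P z)
      then have z: "z = Inl x" by simp
      have "x \<notin> \<Union>(Domain ?R)"
      proof
        assume "x \<in> \<Union>(Domain ?R)"
        then obtain A B where "(A,B) \<in> ?R" "x \<in> A" by blast
        then show False using P(3) z by fastforce
      qed
      then show ?thesis using x(1) unfolding free_def by simp
    qed
  next
    fix x assume "x \<in> free n (Domain ?R)"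
    then have x: "x \<in> {1..n}" "x \<notin> \<Union>(Domain ?R)" unfolding free_def by simp_all
    have "Inl x \<notin> lineset A B" if "(A,B) \<in> ?R" for A B
      using that x(2) by fastforce
    then have "{Inl x} \<in> mk n ?R" using mk_ptI[of "Inl x" n ?R] x(1) by simp
    then show "x \<in> {x\<in>{1..n}. {Inl x} \<in> e}" using K4[OF e] x(1) by simp
  qed
  then show ?thesis unfolding corank_def by simp
qed

definition Rpi :: "nat \<Rightarrow> (nat \<Rightarrow> nat) \<Rightarrow> (nat set \<times> nat set) set" where
  "Rpi n \<pi> = (\<lambda>x. ({x},{\<pi> x})) ` {1..n}"

lemma lineset_single: "lineset {x} {y} = {Inl x, Inr y}"
  by (auto simp: lineset_def)

lemma Pts_empty: assumes "\<And>z. z \<in> Xs n \<union> Xs' n \<Longrightarrow> \<exists>A B. (A,B) \<in> R \<and> z \<in> lineset A B"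
  shows "Pts n R = {}"
proof -
  have "z \<in> \<Union>(lsp ` R)" if "z \<in> Xs n \<union> Xs' n" for z
    using assms[OF that] in_lsp_Union[of z R] by simp
  then show ?thesis unfolding Pts_def by blast
qed

lemma Sym_mk: assumes b: "bij_betw \<pi> {1..n} {1..n}"
  shows "{{Inl x, Inr (\<pi> x)} | x. x \<in> {1..n}} = mk n (Rpi n \<pi>)"
proof -
  have surj: "\<pi> ` {1..n} = {1..n}" using b unfolding bij_betw_def by simp
  have cov: "\<exists>A B. (A,B) \<in> Rpi n \<pi> \<and> z \<in> lineset A B" if z: "z \<in> Xs n \<union> Xs' n" for z
  proof (cases z)
    case (Inl x)
    then have "x \<in> {1..n}" using z by simp
    then have "({x},{\<pi> x}) \<in> Rpi n \<pi>" unfolding Rpi_def by blast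
    then show ?thesis using Inl by fastforce
  next
    case (Inr y)
    then have "y \<in> {1..n}" using z by simp
    then obtain x where x: "x \<in> {1..n}" "y = \<pi> x" using surj by (metis imageE)
    then have "({x},{\<pi> x}) \<in> Rpi n \<pi>" unfolding Rpi_def by blast
    then show ?thesis using Inr x by fastforce
  qed
  have "mk n (Rpi n \<pi>) = lsp ` Rpi n \<pi>" unfolding mk_def using Pts_empty[OF cov] by simp
  also have "\<dots> = (\<lambda>x. {Inl x, Inr (\<pi> x)}) ` {1..n}"
    unfolding Rpi_def image_image by (simp add: lineset_single)
  also have "\<dots> = {{Inl x, Inr (\<pi> x)} | x. x \<in> {1..n}}" by blast
  finally show ?thesis by simp
qed

lemma Rpi_Gr: assumes b: "bij_betw \<pi> {1..n} {1..n}" shows "Rpi n \<pi> \<in> Gr n (Sg n)"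
proof -
  have surj: "\<pi> ` {1..n} = {1..n}" and inj: "inj_on \<pi> {1..n}" using b unfolding bij_betw_def by simp_all
  have v: "valid n (Rpi n \<pi>)"
  proof (rule validI)
    fix A B assume "(A,B) \<in> Rpi n \<pi>"
    then obtain x where x: "x \<in> {1..n}" "A = {x}" "B = {\<pi> x}" unfolding Rpi_def by blast
    have "\<pi> x \<in> {1..n}" using surj x(1) by blast
    then show "A \<noteq> {} \<and> B \<noteq> {} \<and> A \<subseteq> {1..n} \<and> B \<subseteq> {1..n}" using x by simp
  next
    fix A B A' B' assume "(A,B) \<in> Rpi n \<pi>" "(A',B') \<in> Rpi n \<pi>" "(A,B) \<noteq> (A',B')"
    then obtain x x' where x: "x \<in> {1..n}" "A = {x}" "B = {\<pi> x}" "x' \<in> {1..n}" "A' = {x'}" "B' = {\<pi> x'}"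
      "x \<noteq> x'" unfolding Rpi_def by blast
    have "\<pi> x \<noteq> \<pi> x'" using inj x(1,4,7) by (metis inj_on_eq_iff)
    then show "A \<inter> A' = {} \<and> B \<inter> B' = {}" using x by simp
  qed
  have "Domain (Rpi n \<pi>) = Sg n" unfolding Rpi_def Sg_def by force
  moreover have "Range (Rpi n \<pi>) = Sg n"
  proof -
    have "Range (Rpi n \<pi>) = (\<lambda>x. {\<pi> x}) ` {1..n}" unfolding Rpi_def by force
    also have "\<dots> = (\<lambda>y. {y}) ` (\<pi> ` {1..n})" by (simp add: image_image)
    finally show ?thesis unfolding Sg_def surj .
  qed
  ultimately show ?thesis using v unfolding Gr_def by simp
qed

lemma Gr_Rpi: assumes g: "R \<in> Gr n (Sg n)" shows "\<exists>\<pi>. bij_betw \<pi> {1..n} {1..n} \<and> R = Rpi n \<pi>"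
proof -
  have v: "valid n R" and D: "Domain R = Sg n" and Rg: "Range R = Sg n" using g unfolding Gr_def by simp_all
  define \<pi> where "\<pi> = (\<lambda>x. SOME y. ({x},{y}) \<in> R)"
  have pin: "({x},{\<pi> x}) \<in> R" if x: "x \<in> {1..n}" for x
  proof -
    have "{x} \<in> Domain R" using D x unfolding Sg_def by blast
    then obtain B where B: "({x},B) \<in> R" by blast
    then have "B \<in> Sg n" using Rg by blast
    then obtain y where "B = {y}" unfolding Sg_def by blast
    then have "\<exists>y. ({x},{y}) \<in> R" using B by blast
    then show ?thesis unfolding \<pi>_def by (rule someI_ex)
  qed
  have pim: "\<pi> x \<in> {1..n}" if x: "x \<in> {1..n}" for x
  proof -
    have "{\<pi> x} \<in> Range R" using pin[OF x] by blast
    then show ?thesis using Rg unfolding Sg_def by auto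
  qed
  have RR: "R = Rpi n \<pi>"
  proof
    show "R \<subseteq> Rpi n \<pi>"
    proof
      fix p assume p: "p \<in> R"
      obtain A B where AB: "p = (A,B)" by (cases p)
      then have "A \<in> Sg n" using p D by blast
      then obtain x where x: "x \<in> {1..n}" "A = {x}" unfolding Sg_def by blast
      have "B = {\<pi> x}" using valid_fun[OF v _ pin[OF x(1)]] p AB x(2) by simp
      then show "p \<in> Rpi n \<pi>" using AB x unfolding Rpi_def by blast
    qed
    show "Rpi n \<pi> \<subseteq> R" using pin unfolding Rpi_def by blast
  qed
  have inj: "inj_on \<pi> {1..n}"
  proof (rule inj_onI)
    fix x x' assume x: "x \<in> {1..n}" "x' \<in> {1..n}" "\<pi> x = \<pi> x'"
    have "{x} = {x'}" using valid_inj[OF v pin[OF x(1)]] pin[OF x(2)] x(3) by simp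
    then show "x = x'" by simp
  qed
  have surj: "\<pi> ` {1..n} = {1..n}"
  proof
    show "\<pi> ` {1..n} \<subseteq> {1..n}" using pim by blast
    show "{1..n} \<subseteq> \<pi> ` {1..n}"
    proof
      fix y assume y: "y \<in> {1..n}"
      then have "{y} \<in> Range R" using Rg unfolding Sg_def by blast
      then obtain A where A: "(A,{y}) \<in> R" by blast
      then have "A \<in> Sg n" using D by blast
      then obtain x where x: "x \<in> {1..n}" "A = {x}" unfolding Sg_def by blast
      have "{y} = {\<pi> x}" using valid_fun[OF v _ pin[OF x(1)]] A x(2) by simp
      then show "y \<in> \<pi> ` {1..n}" using x(1) by simp
    qed
  qed
  show ?thesis using inj surj RR unfolding bij_betw_def by blast
qed

lemma Sym_eq: "Sym_n n = mk n ` Gr n (Sg n)"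
proof
  show "Sym_n n \<subseteq> mk n ` Gr n (Sg n)"
  proof
    fix \<alpha> assume "\<alpha> \<in> Sym_n n"
    then obtain \<pi> where p: "bij_betw \<pi> {1..n} {1..n}" "\<alpha> = {{Inl x, Inr (\<pi> x)} | x. x \<in> {1..n}}"
      unfolding Sym_n_def by blast
    then have "\<alpha> = mk n (Rpi n \<pi>)" using Sym_mk by simp
    then show "\<alpha> \<in> mk n ` Gr n (Sg n)" using Rpi_Gr[OF p(1)] by simp
  qed
  show "mk n ` Gr n (Sg n) \<subseteq> Sym_n n"
  proof
    fix \<alpha> assume "\<alpha> \<in> mk n ` Gr n (Sg n)"
    then obtain R where R: "R \<in> Gr n (Sg n)" "\<alpha> = mk n R" by blast
    then obtain \<pi> where p: "bij_betw \<pi> {1..n} {1..n}" "R = Rpi n \<pi>" using Gr_Rpi by blast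
    then have "\<alpha> = {{Inl x, Inr (\<pi> x)} | x. x \<in> {1..n}}" using Sym_mk R(2) by simp
    then show "\<alpha> \<in> Sym_n n" unfolding Sym_n_def using p(1) by blast
  qed
qed

lemma Gr_valid: "R \<in> Gr n F \<Longrightarrow> valid n R"
  unfolding Gr_def by simp

lemma Sym_sub: "Sym_n n \<subseteq> PIbar n"
  unfolding Sym_eq using K1 Gr_valid by blast

lemma Sym_img: "Lr n ` Sym_n n = Gr n (Sg n)"
proof -
  have "Lr n ` Sym_n n = (\<lambda>R. Lr n (mk n R)) ` Gr n (Sg n)" unfolding Sym_eq image_image ..
  also have "\<dots> = Gr n (Sg n)" using K2 Gr_valid by (simp cong: image_cong)
  finally show ?thesis .
qed

lemma Dom_comp: "Domain (R O S) \<subseteq> Domain R" by blast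
lemma Ran_comp: "Range (R O S) \<subseteq> Range S" by blast

lemma H1: assumes e: "e \<in> PIbar n" and Le: "Lr n e = Id_on F" and a: "a \<in> Hclass n e"
  shows "Lr n a \<in> Gr n F"
proof -
  have aP: "a \<in> PIbar n" and gR: "greenR n a e" and gL: "greenL n a e" using a unfolding Hclass_def by simp_all
  have d1: "Domain (Lr n a) \<subseteq> Domain (Lr n e)"
  proof (cases "a = e")
    case False
    then obtain s where "s \<in> PIbar n" "a = pmult n e s" using gR unfolding greenR_def by blast
    then have "Lr n a = Lr n e O Lr n s" using Lr_pmult e by simp
    then show ?thesis using Dom_comp by metis
  qed simp
  have d2: "Domain (Lr n e) \<subseteq> Domain (Lr n a)"
  proof (cases "e = a")
    case False
    then obtain s where "s \<in> PIbar n" "e = pmult n a s" using gR unfolding greenR_def by blast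
    then have "Lr n e = Lr n a O Lr n s" using Lr_pmult aP by simp
    then show ?thesis using Dom_comp by metis
  qed simp
  have r1: "Range (Lr n a) \<subseteq> Range (Lr n e)"
  proof (cases "a = e")
    case False
    then obtain s where "s \<in> PIbar n" "a = pmult n s e" using gL unfolding greenL_def by blast
    then have "Lr n a = Lr n s O Lr n e" using Lr_pmult e by simp
    then show ?thesis using Ran_comp by metis
  qed simp
  have r2: "Range (Lr n e) \<subseteq> Range (Lr n a)"
  proof (cases "e = a")
    case False
    then obtain s where "s \<in> PIbar n" "e = pmult n s a" using gL unfolding greenL_def by blast
    then have "Lr n e = Lr n s O Lr n a" using Lr_pmult aP by simp
    then show ?thesis using Ran_comp by metis
  qed simp
  have "Domain (Lr n a) = F" using d1 d2 Le by simp
  moreover have "Range (Lr n a) = F" using r1 r2 Le by simp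
  ultimately show ?thesis using K3[OF aP] unfolding Gr_def by simp
qed

lemma H2: assumes e: "e \<in> PIbar n" and Le: "Lr n e = Id_on F" and R: "R \<in> Gr n F"
  shows "mk n R \<in> Hclass n e"
proof -
  have v: "valid n R" and D: "Domain R = F" and Rg: "Range R = F" using R unfolding Gr_def by simp_all
  let ?a = "mk n R" and ?b = "mk n (converse R)"
  have a: "?a \<in> PIbar n" "Lr n ?a = R" using mkL[OF v] by simp_all
  have b: "?b \<in> PIbar n" "Lr n ?b = converse R" using mkL[OF valid_converse[OF v]] by simp_all
  have 1: "?a = pmult n e ?a"
    by (rule Lr_inj[OF a(1) pmult_PI[OF e a(1)]]) (simp add: Lr_pmult[OF e a(1)] a(2) Le comp_Id_on_left D)
  have 2: "e = pmult n ?a ?b"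
    by (rule Lr_inj[OF e pmult_PI[OF a(1) b(1)]]) (simp add: Lr_pmult[OF a(1) b(1)] a(2) b(2) Le comp_conv[OF v] D)
  have 3: "?a = pmult n ?a e"
    by (rule Lr_inj[OF a(1) pmult_PI[OF a(1) e]]) (simp add: Lr_pmult[OF a(1) e] a(2) Le comp_Id_on_right Rg)
  have 4: "e = pmult n ?b ?a"
    by (rule Lr_inj[OF e pmult_PI[OF b(1) a(1)]]) (simp add: Lr_pmult[OF b(1) a(1)] a(2) b(2) Le conv_comp[OF v] Rg)
  have "greenR n ?a e" unfolding greenR_def using 1 2 a(1) b(1) e by blast
  moreover have "greenL n ?a e" unfolding greenL_def using 3 4 a(1) b(1) e by blast
  ultimately show ?thesis unfolding Hclass_def using a(1) by simp
qed

lemma H_img: assumes e: "e \<in> PIbar n" and Le: "Lr n e = Id_on F"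
  shows "Lr n ` Hclass n e = Gr n F"
proof
  show "Lr n ` Hclass n e \<subseteq> Gr n F" using H1[OF e Le] by blast
  show "Gr n F \<subseteq> Lr n ` Hclass n e"
  proof
    fix R assume R: "R \<in> Gr n F"
    then have "mk n R \<in> Hclass n e" using H2[OF e Le] by simp
    moreover have "Lr n (mk n R) = R" using K2 Gr_valid[OF R] by simp
    ultimately show "R \<in> Lr n ` Hclass n e" by (metis image_eqI)
  qed
qed

lemma H_sub: "Hclass n e \<subseteq> PIbar n"
  unfolding Hclass_def by blast

theorem mainTheorem13:
  fixes n :: nat and T :: "(nat + nat) set set set"
  assumes "n \<ge> 2"
  shows "(subsemigroup n T \<and> isolated n T) \<longleftrightarrow>
         (T = PIbar n \<or> T = Sym_n n \<or> T = PIbar n - Sym_n n \<or>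
          (\<exists>e. idempotent n e \<and> corank n e \<le> 1 \<and> T = Hclass n e))"
proof (cases "T \<subseteq> PIbar n")
  case False
  have "\<not> subsemigroup n T" using False unfolding subsemigroup_def by blast
  moreover have "T \<noteq> Sym_n n" using False Sym_sub by blast
  moreover have "\<not> (\<exists>e. idempotent n e \<and> corank n e \<le> 1 \<and> T = Hclass n e)" using False H_sub by blast
  ultimately show ?thesis using False by blast
next
  case True
  let ?TT = "Lr n ` T"
  have inj: "inj_on (Lr n) (PIbar n)" by (rule inj_Lr)
  have mem: "x \<in> T \<longleftrightarrow> Lr n x \<in> ?TT" if "x \<in> PIbar n" for x
    using inj_on_image_mem_iff[OF inj that True] by simp
  have sub: "?TT \<subseteq> {R. valid n R}" using True K3 by blast
  have E1: "subsemigroup n T \<longleftrightarrow> (?TT \<noteq> {} \<and> (\<forall>R\<in>?TT. \<forall>Q\<in>?TT. R O Q \<in> ?TT))"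
  proof
    assume s: "subsemigroup n T"
    have "R O Q \<in> ?TT" if RQ: "R \<in> ?TT" "Q \<in> ?TT" for R Q
    proof -
      obtain a b where ab: "a \<in> T" "b \<in> T" "R = Lr n a" "Q = Lr n b" using RQ by blast
      then have "pmult n a b \<in> T" using s unfolding subsemigroup_def by blast
      moreover have "a \<in> PIbar n" "b \<in> PIbar n" using True ab(1,2) by (auto simp: subset_iff)
      moreover have "R O Q = Lr n (pmult n a b)" using ab(3,4) Lr_pmult calculation(2,3) by simp
      ultimately show ?thesis by simp
    qed
    then show "?TT \<noteq> {} \<and> (\<forall>R\<in>?TT. \<forall>Q\<in>?TT. R O Q \<in> ?TT)" using s unfolding subsemigroup_def by blast
  next
    assume r: "?TT \<noteq> {} \<and> (\<forall>R\<in>?TT. \<forall>Q\<in>?TT. R O Q \<in> ?TT)"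
    have "pmult n a b \<in> T" if "a \<in> T" "b \<in> T" for a b
    proof -
      have P: "a \<in> PIbar n" "b \<in> PIbar n" using that True by blast+
      have "Lr n a O Lr n b \<in> ?TT" using r that by blast
      then have "Lr n (pmult n a b) \<in> ?TT" using Lr_pmult[OF P] by simp
      then show ?thesis using mem[OF pmult_PI[OF P]] by simp
    qed
    then show "subsemigroup n T" unfolding subsemigroup_def using r True by blast
  qed
  have E2: "isolated n T \<longleftrightarrow> (\<forall>R k. valid n R \<longrightarrow> R ^^ Suc k \<in> ?TT \<longrightarrow> R \<in> ?TT)"
  proof
    assume i: "isolated n T"
    show "\<forall>R k. valid n R \<longrightarrow> R ^^ Suc k \<in> ?TT \<longrightarrow> R \<in> ?TT"
    proof (intro allI impI)
      fix R k assume v: "valid n R" and p: "R ^^ Suc k \<in> ?TT"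
      have a: "mk n R \<in> PIbar n" "Lr n (mk n R) = R" using mkL[OF v] by simp_all
      have "Lr n (ppow n (mk n R) k) = R ^^ Suc k" "ppow n (mk n R) k \<in> PIbar n" using ppow_PI[OF a(1)] a(2) by simp_all
      then have "ppow n (mk n R) k \<in> T" using mem p by simp
      then have "mk n R \<in> T" using i a(1) unfolding isolated_def by blast
      then show "R \<in> ?TT" using a(2) by (metis image_eqI)
    qed
  next
    assume r: "\<forall>R k. valid n R \<longrightarrow> R ^^ Suc k \<in> ?TT \<longrightarrow> R \<in> ?TT"
    show "isolated n T" unfolding isolated_def
    proof (intro ballI allI impI)
      fix a k assume a: "a \<in> PIbar n" and p: "ppow n a k \<in> T"
      have "Lr n (ppow n a k) = Lr n a ^^ Suc k" using ppow_PI[OF a] by simp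
      then have "Lr n a ^^ Suc k \<in> ?TT" using p by (metis image_eqI)
      then have "Lr n a \<in> ?TT" using r K3[OF a] by blast
      then show "a \<in> T" using mem[OF a] by simp
    qed
  qed
  have eqi: "T = X \<longleftrightarrow> ?TT = Lr n ` X" if "X \<subseteq> PIbar n" for X
    by (rule inj_on_image_eq_iff[OF inj True that, symmetric])
  have E3: "T = PIbar n \<longleftrightarrow> ?TT = {R. valid n R}"
  proof -
    have "T = PIbar n \<longleftrightarrow> ?TT = Lr n ` PIbar n" by (rule eqi) (rule order_refl)
    then show ?thesis unfolding img_PI .
  qed
  have E4: "T = Sym_n n \<longleftrightarrow> ?TT = Gr n (Sg n)"
  proof -
    have "T = Sym_n n \<longleftrightarrow> ?TT = Lr n ` Sym_n n" by (rule eqi) (rule Sym_sub)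
    then show ?thesis unfolding Sym_img .
  qed
  have E5: "T = PIbar n - Sym_n n \<longleftrightarrow> ?TT = {R. valid n R} - Gr n (Sg n)"
  proof -
    have ds: "PIbar n - Sym_n n \<subseteq> PIbar n" by (rule Diff_subset)
    have "Lr n ` (PIbar n - Sym_n n) = Lr n ` PIbar n - Lr n ` Sym_n n"
      by (rule inj_on_image_set_diff[OF inj ds Sym_sub])
    then have im: "Lr n ` (PIbar n - Sym_n n) = {R. valid n R} - Gr n (Sg n)" unfolding img_PI Sym_img .
    have "T = PIbar n - Sym_n n \<longleftrightarrow> ?TT = Lr n ` (PIbar n - Sym_n n)" by (rule eqi[OF ds])
    then show ?thesis unfolding im .
  qed
  have E6: "(\<exists>e. idempotent n e \<and> corank n e \<le> 1 \<and> T = Hclass n e) \<longleftrightarrow>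
            (\<exists>F. fam n F \<and> card (free n F) \<le> 1 \<and> ?TT = Gr n F)"
  proof
    assume "\<exists>e. idempotent n e \<and> corank n e \<le> 1 \<and> T = Hclass n e"
    then obtain e where e: "idempotent n e" "corank n e \<le> 1" "T = Hclass n e" by blast
    have eP: "e \<in> PIbar n" and id: "Lr n e O Lr n e = Lr n e" using e(1) idem_char by simp_all
    define F where "F = Domain (Lr n e)"
    have Le: "Lr n e = Id_on F" using idem_Id[OF K3[OF eP] id] unfolding F_def .
    have fF: "fam n F" using fam_Domain[OF K3[OF eP]] unfolding F_def .
    have cF: "card (free n F) \<le> 1" using e(2) corank_eq[OF eP] unfolding F_def by simp
    have "?TT = Gr n F" using H_img[OF eP Le] e(3) by simp
    then show "\<exists>F. fam n F \<and> card (free n F) \<le> 1 \<and> ?TT = Gr n F" using fF cF by blast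
  next
    assume "\<exists>F. fam n F \<and> card (free n F) \<le> 1 \<and> ?TT = Gr n F"
    then obtain F where F: "fam n F" "card (free n F) \<le> 1" "?TT = Gr n F" by blast
    define e where "e = mk n (Id_on F)"
    have eP: "e \<in> PIbar n" and Le: "Lr n e = Id_on F" using mkL[of n "Id_on F"] F(1) valid_Id_on unfolding e_def by simp_all
    have ide: "idempotent n e" using idem_char eP Le Id_on_comp[of F F] by simp
    have "corank n e = card (free n F)" using corank_eq[OF eP] Le by simp
    then have ce: "corank n e \<le> 1" using F(2) by simp
    have "Lr n ` Hclass n e = ?TT" using H_img[OF eP Le] F(3) by simp
    then have "T = Hclass n e" using eqi[OF H_sub] by simp
    then show "\<exists>e. idempotent n e \<and> corank n e \<le> 1 \<and> T = Hclass n e" using ide ce by blast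
  qed
  have RM: "((?TT \<noteq> {} \<and> (\<forall>R\<in>?TT. \<forall>Q\<in>?TT. R O Q \<in> ?TT)) \<and> (\<forall>R k. valid n R \<longrightarrow> R ^^ Suc k \<in> ?TT \<longrightarrow> R \<in> ?TT))
    \<longleftrightarrow> (?TT = {R. valid n R} \<or> ?TT = Gr n (Sg n) \<or> ?TT = {R. valid n R} - Gr n (Sg n) \<or>
         (\<exists>F. fam n F \<and> card (free n F) \<le> 1 \<and> ?TT = Gr n F))"
    using rel_main[OF assms sub] by (simp only: conj_assoc)
  show ?thesis
    unfolding E1 E2 E3 E4 E5 E6 by (rule RM)
qed

end
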